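(* Let $0<\varepsilon\le\pi/39$ and let $G=(V,E)$ be an $\varepsilon$-regular graph with $N=\#V$ such that $\max_{\gamma\in\Gamma(G)}\theta_{\rm ex}(\gamma)<\frac{\pi}{10}-\frac75\varepsilon$. Then: (i) $\sum_{s\in\mathcal{S}}l(s)=2N$; (ii) $F_{{\rm bond},\beta}(G)=2(1-\beta)\#\mathcal{S}_{\rm int}+2\#\mathcal{S}_{\rm no}$; (iii) each $x\in V$ is contained in exactly two elements of $\mathcal{S}$, say $s(x)$ and $s^\perp(x)$, and $s^\perp(x)\in\mathcal{S}^\perp(s(x))$.
   Context: Substrate $\mathcal{L}^-=\mathbb{Z}^2\cap\{x_2\le0\}$; fix $\beta>0$, $r_0\in(1,\sqrt2)$. $\theta_{x,y,z}\in[0,2\pi)$ is the clockwise angle between $x-y$ and $z-y$. For a graph $G=(V,E)$ with $V\subset\{x_2>0\}$ finite: $\mathcal{N}(x,E)=\{y\in V:\{x,y\}\in E\}$, $\mathcal{N}_{\mathcal{L}^-}(x)=\{y\in\mathcal{L}^-:|x-y|\le r_0\}$. Bond energy: $F_{{\rm bond},\beta}(G)=\sum_{x\in V}\big(4-\#\mathcal{N}(x,E)-2\beta\#\mathcal{N}_{\mathcal{L}^-}(x)\big)$. Bonds of $G$: edges of $E$, pairs $\{x,z\}$ with $x\in V$, $z\in\mathcal{N}_{\mathcal{L}^-}(x)$, and pairs $\{z,z'\}\subset\mathcal{L}^-$ with $|z-z'|=1$; a bond angle is $\theta_{x,y,z}$ with $x,y,z$ pairwise distinct in $V\cup\mathcal{L}^-$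 and $\{x,y\},\{y,z\}$ bonds. $G$ is $\varepsilon$-regular if $|x-y|\ge1-\varepsilon$ for all distinct $x,y\in V\cup\mathcal{L}^-$ and every bond angle lies in $[\pi/2-\varepsilon,\pi/2+\varepsilon]\cup[\pi-\varepsilon,\pi+\varepsilon]\cup[3\pi/2-\varepsilon,3\pi/2+\varepsilon]$. Straight paths: $\gamma=(x_1,\dots,x_n)$, $x_i\in V$, $n\ge2$, with $\{x_i,x_{i+1}\}\in E$, $\theta_{x_{i+1},x_i,x_{i-1}}\in[\pi-\varepsilon,\pi+\varepsilon]$ for $2\le i\le n-1$, edges $\{x_i,x_{i+1}\}$ pairwise distinct; $\Gamma(G)$ is their set. Angle excess: $\theta_{\rm ex}(\gamma)=\sum_{i=2}^{n-1}|\theta_{x_{i+1},x_i,x_{i-1}}-\pi|$. $\mathcal{S}_\Gamma$: straight paths maximal with respect to inclusion as consecutive subpaths (paths identified with reversals). $V_i=\{x\in V:\#\mathcal{N}(x,E)=i\}$, $V_2^\pi=\{x\in V_2:\theta_{x_1,x,x_2}\in[\pi-\varepsilon,\pi+\varepsilon]$ where $\mathcal{N}(x,E)=\{x_1,x_2\}\}$. Strata $\mathcal{S}$: multiset of the elements of $\mathcal{S}_\Gamma$, two copies of $(x)$ for each $x\in V_0$, one copy of $(x)$ for each $x\in V_1\cup V_2^\pi$. $s=(x_1,\dots,x_n)\in\mathcal{S}_\Gamma$ is interacting if there is $z_0\in\mathcal{N}_{\mathcal{L}^-}(x_1)$ with $\theta_{z_0,x_1,x_2}\in[\pi-\varepsilon,\pi+\varepsilon]$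 or $z_{n+1}\in\mathcal{N}_{\mathcal{L}^-}(x_n)$ with $\theta_{x_{n-1},x_n,z_{n+1}}\in[\pi-\varepsilon,\pi+\varepsilon]$. $\mathcal{S}_{\rm int}$: interacting elements of $\mathcal{S}_\Gamma$, one copy of $(x)$ for each $x\in V_0\cup V_2^\pi$ with $\mathcal{N}_{\mathcal{L}^-}(x)\ne\emptyset$, and $(x)$ for each $x\in V_1$ with $\mathcal{N}_{\mathcal{L}^-}(x)\ne\emptyset$ not on any interacting element of $\mathcal{S}_\Gamma$; $\mathcal{S}_{\rm no}=\mathcal{S}\setminus\mathcal{S}_{\rm int}$ (multiset difference). Multiset cardinalities count multiplicity. $l((x_1,\dots,x_n))=n$. $\mathcal{S}^\perp(s)$: elements of $\mathcal{S}$ other than $s$ sharing a point with $s$. *)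

theory Defs
  imports "HOL-Analysis.Analysis" "HOL-Library.Multiset" "HOL-Library.Sublist"
begin

text \<open>Points of the plane are complex numbers; the second coordinate is Im.\<close>

definition substrate :: "complex set" where
  "substrate = {Complex (of_int m) (of_int n) | m n. n \<le> 0}"

text \<open>Clockwise angle between x - y and z - y, valued in [0, 2 pi).\<close>
definition cw_angle :: "complex \<Rightarrow> complex \<Rightarrow> complex \<Rightarrow> real" where
  "cw_angle x y z = (let a = Arg ((x - y) / (z - y)) in if a < 0 then a + 2 * pi else a)"

definition nbr :: "complex set \<Rightarrow> complex set set \<Rightarrow> complex \<Rightarrow> complex set" where
  "nbr V E x = {y \<in> V. {x, y} \<in> E}"

definition nbr_sub :: "real \<Rightarrow> complex \<Rightarrow> complex set" where
  "nbr_sub r0 x = {z \<in> substrate. cmod (x - z) \<le> r0}"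

definition F_bond :: "real \<Rightarrow> real \<Rightarrow> complex set \<Rightarrow> complex set set \<Rightarrow> real" where
  "F_bond \<beta> r0 V E = (\<Sum>x\<in>V. 4 - real (card (nbr V E x)) - 2 * \<beta> * real (card (nbr_sub r0 x)))"

definition bonds :: "real \<Rightarrow> complex set \<Rightarrow> complex set set \<Rightarrow> complex set set" where
  "bonds r0 V E = E \<union> {{x, z} | x z. x \<in> V \<and> z \<in> nbr_sub r0 x}
     \<union> {{z, z'} | z z'. z \<in> substrate \<and> z' \<in> substrate \<and> cmod (z - z') = 1}"

definition regular :: "real \<Rightarrow> real \<Rightarrow> complex set \<Rightarrow> complex set set \<Rightarrow> bool" where
  "regular \<epsilon> r0 V E \<longleftrightarrow>
     (\<forall>x \<in> V \<union> substrate. \<forall>y \<in> V \<union> substrate. x \<noteq> y \<longrightarrow> cmod (x - y) \<ge> 1 - \<epsilon>) \<and>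
     (\<forall>x \<in> V \<union> substrate. \<forall>y \<in> V \<union> substrate. \<forall>z \<in> V \<union> substrate.
        x \<noteq> y \<and> y \<noteq> z \<and> x \<noteq> z \<and> {x, y} \<in> bonds r0 V E \<and> {y, z} \<in> bonds r0 V E \<longrightarrow>
        cw_angle x y z \<in> {pi/2 - \<epsilon> .. pi/2 + \<epsilon>} \<union> {pi - \<epsilon> .. pi + \<epsilon>} \<union> {3*pi/2 - \<epsilon> .. 3*pi/2 + \<epsilon>})"

definition straight_path :: "real \<Rightarrow> complex set \<Rightarrow> complex set set \<Rightarrow> complex list \<Rightarrow> bool" where
  "straight_path \<epsilon> V E \<gamma> \<longleftrightarrow> length \<gamma> \<ge> 2 \<and> set \<gamma> \<subseteq> V \<and>
     (\<forall>i. Suc i < length \<gamma> \<longrightarrow> {\<gamma> ! i, \<gamma> ! Suc i} \<in> E) \<and>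
     (\<forall>i. 0 < i \<and> Suc i < length \<gamma> \<longrightarrow>
        cw_angle (\<gamma> ! Suc i) (\<gamma> ! i) (\<gamma> ! (i - 1)) \<in> {pi - \<epsilon> .. pi + \<epsilon>}) \<and>
     (\<forall>i j. Suc i < length \<gamma> \<and> Suc j < length \<gamma> \<and> i \<noteq> j \<longrightarrow>
        {\<gamma> ! i, \<gamma> ! Suc i} \<noteq> {\<gamma> ! j, \<gamma> ! Suc j})"

definition Gamma :: "real \<Rightarrow> complex set \<Rightarrow> complex set set \<Rightarrow> complex list set" where
  "Gamma \<epsilon> V E = {\<gamma>. straight_path \<epsilon> V E \<gamma>}"

definition angle_excess :: "complex list \<Rightarrow> real" where
  "angle_excess \<gamma> = (\<Sum>i \<in> {1 ..< length \<gamma> - 1}.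
      \<bar>cw_angle (\<gamma> ! Suc i) (\<gamma> ! i) (\<gamma> ! (i - 1)) - pi\<bar>)"

text \<open>An unoriented path: a path identified with its reversal.\<close>
definition upath :: "complex list \<Rightarrow> complex list set" where
  "upath \<gamma> = {\<gamma>, rev \<gamma>}"

definition slen :: "complex list set \<Rightarrow> nat" where
  "slen s = length (SOME \<gamma>. \<gamma> \<in> s)"

definition spts :: "complex list set \<Rightarrow> complex set" where
  "spts s = (\<Union>\<gamma>\<in>s. set \<gamma>)"

definition maximal_straight :: "real \<Rightarrow> complex set \<Rightarrow> complex set set \<Rightarrow> complex list \<Rightarrow> bool" where
  "maximal_straight \<epsilon> V E \<gamma> \<longleftrightarrow> \<gamma> \<in> Gamma \<epsilon> V E \<and>
     \<not> (\<exists>\<gamma>' \<in> Gamma \<epsilon> V E. (sublist \<gamma> \<gamma>' \<or> sublist \<gamma> (rev \<gamma>')) \<and> \<not> (\<gamma>' = \<gamma> \<or> \<gamma>' = rev \<gamma>))"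

definition S_Gamma :: "real \<Rightarrow> complex set \<Rightarrow> complex set set \<Rightarrow> complex list set set" where
  "S_Gamma \<epsilon> V E = upath ` {\<gamma>. maximal_straight \<epsilon> V E \<gamma>}"

definition Vdeg :: "complex set \<Rightarrow> complex set set \<Rightarrow> nat \<Rightarrow> complex set" where
  "Vdeg V E i = {x \<in> V. card (nbr V E x) = i}"

definition V2pi :: "real \<Rightarrow> complex set \<Rightarrow> complex set set \<Rightarrow> complex set" where
  "V2pi \<epsilon> V E = {x \<in> Vdeg V E 2. \<exists>x1 x2. nbr V E x = {x1, x2} \<and>
       cw_angle x1 x x2 \<in> {pi - \<epsilon> .. pi + \<epsilon>}}"

definition strata :: "real \<Rightarrow> complex set \<Rightarrow> complex set set \<Rightarrow> complex list set multiset" where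
  "strata \<epsilon> V E = mset_set (S_Gamma \<epsilon> V E)
     + image_mset (\<lambda>x. upath [x]) (mset_set (Vdeg V E 0))
     + image_mset (\<lambda>x. upath [x]) (mset_set (Vdeg V E 0))
     + image_mset (\<lambda>x. upath [x]) (mset_set (Vdeg V E 1 \<union> V2pi \<epsilon> V E))"

definition interacting_path :: "real \<Rightarrow> real \<Rightarrow> complex list \<Rightarrow> bool" where
  "interacting_path \<epsilon> r0 \<gamma> \<longleftrightarrow>
     (\<exists>z0 \<in> nbr_sub r0 (\<gamma> ! 0). cw_angle z0 (\<gamma> ! 0) (\<gamma> ! 1) \<in> {pi - \<epsilon> .. pi + \<epsilon>}) \<or>
     (\<exists>z \<in> nbr_sub r0 (last \<gamma>).
        cw_angle (\<gamma> ! (length \<gamma> - 2)) (last \<gamma>) z \<in> {pi - \<epsilon> .. pi + \<epsilon>})"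

definition interacting :: "real \<Rightarrow> real \<Rightarrow> complex list set \<Rightarrow> bool" where
  "interacting \<epsilon> r0 s \<longleftrightarrow> (\<exists>\<gamma> \<in> s. interacting_path \<epsilon> r0 \<gamma>)"

definition strata_int :: "real \<Rightarrow> real \<Rightarrow> complex set \<Rightarrow> complex set set \<Rightarrow> complex list set multiset" where
  "strata_int \<epsilon> r0 V E = mset_set {s \<in> S_Gamma \<epsilon> V E. interacting \<epsilon> r0 s}
     + image_mset (\<lambda>x. upath [x])
         (mset_set {x \<in> Vdeg V E 0 \<union> V2pi \<epsilon> V E. nbr_sub r0 x \<noteq> {}})
     + image_mset (\<lambda>x. upath [x])
         (mset_set {x \<in> Vdeg V E 1. nbr_sub r0 x \<noteq> {} \<and>
            \<not> (\<exists>s \<in> S_Gamma \<epsilon> V E. interacting \<epsilon> r0 s \<and> x \<in> spts s)})"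

definition strata_no :: "real \<Rightarrow> real \<Rightarrow> complex set \<Rightarrow> complex set set \<Rightarrow> complex list set multiset" where
  "strata_no \<epsilon> r0 V E = strata \<epsilon> V E - strata_int \<epsilon> r0 V E"

definition strata_perp :: "real \<Rightarrow> complex set \<Rightarrow> complex set set \<Rightarrow> complex list set \<Rightarrow> complex list set multiset" where
  "strata_perp \<epsilon> V E s = filter_mset (\<lambda>t. spts t \<inter> spts s \<noteq> {}) (strata \<epsilon> V E - {#s#})"

end

theory Submission
  imports Defs
begin

definition ang :: "complex \<Rightarrow> real" where
  "ang w = (let a = Arg w in if a < 0 then a + 2 * pi else a)"

lemma cw_ang: "cw_angle x y z = ang ((x-y)/(z-y))"
  by (simp add: cw_angle_def ang_def)

lemma ang_bounds: "0 \<le> ang w" "ang w < 2 * pi"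
  using mpi_less_Arg[of w] Arg_le_pi[of w] pi_gt_zero
  by (auto simp: ang_def Let_def)

definition rep :: "complex \<Rightarrow> real \<Rightarrow> bool" where
  "rep w t \<longleftrightarrow> (\<exists>\<rho>>0. w = complex_of_real \<rho> * exp (\<i> * complex_of_real t))"

lemma exp_shift: "exp (\<i> * complex_of_real (t + 2 * pi * of_int k)) = exp (\<i> * complex_of_real t)"
proof -
  have "\<i> * complex_of_real (t + 2 * pi * of_int k) = \<i> * complex_of_real t + of_int (2 * k) * pi * \<i>"
    by (simp add: algebra_simps)
  then show ?thesis using exp_eq by (metis add.commute exp_eq)
qed

lemma rep_shift: "rep w t \<Longrightarrow> rep w (t + 2 * pi * of_int k)"
  unfolding rep_def using exp_shift by metis

lemma rep_ang: "w \<noteq> 0 \<Longrightarrow> rep w (ang w)"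
proof -
  assume w: "w \<noteq> 0"
  have "rep w (Arg w)" unfolding rep_def using Arg_eq[OF w] w by (intro exI[of _ "norm w"]) auto
  then show ?thesis unfolding ang_def Let_def using rep_shift[of w "Arg w" 1] by auto
qed

lemma rep_nz: "rep w t \<Longrightarrow> w \<noteq> 0"
  unfolding rep_def by auto

lemma rep_mult: "rep w a \<Longrightarrow> rep v b \<Longrightarrow> rep (w * v) (a+b)"
  unfolding rep_def
proof (elim exE conjE)
  fix r s assume "r > 0" "w = complex_of_real r * exp (\<i> * complex_of_real a)"
     "s > 0" "v = complex_of_real s * exp (\<i> * complex_of_real b)"
  then show "\<exists>\<rho>>0. w * v = complex_of_real \<rho> * exp (\<i> * complex_of_real (a + b))"
    by (intro exI[of _ "r * s"]) (auto simp: exp_add[symmetric] algebra_simps)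
qed

lemma rep_inv: "rep w a \<Longrightarrow> rep (inverse w) (-a)"
  unfolding rep_def
proof (elim exE conjE)
  fix r assume "r > 0" "w = complex_of_real r * exp (\<i> * complex_of_real a)"
  then show "\<exists>\<rho>>0. inverse w = complex_of_real \<rho> * exp (\<i> * complex_of_real (-a))"
    by (intro exI[of _ "inverse r"]) (auto simp: exp_minus)
qed

lemma rep_div: "rep w a \<Longrightarrow> rep v b \<Longrightarrow> rep (w/v) (a-b)"
  using rep_mult[OF _ rep_inv[of v b], of w a] by (simp add: divide_inverse)

lemma rep_neg1: "rep (-1) pi"
  unfolding rep_def by (intro exI[of _ 1]) auto

lemma rep_neg: "rep w a \<Longrightarrow> rep (-w) (a+pi)"
  using rep_mult[OF _ rep_neg1, of w a] by simp

lemma rep_pos: "r > 0 \<Longrightarrow> rep (complex_of_real r) 0"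
  unfolding rep_def by auto

lemma rep_uniq: "rep w a \<Longrightarrow> rep w b \<Longrightarrow> \<exists>k::int. a = b + 2 * pi * of_int k"
proof -
  assume "rep w a" "rep w b"
  then obtain r s where r: "r > 0" "w = complex_of_real r * exp (\<i> * complex_of_real a)"
    and s: "s > 0" "w = complex_of_real s * exp (\<i> * complex_of_real b)" unfolding rep_def by auto
  have "norm w = r" using r by (simp add: norm_mult)
  moreover have "norm w = s" using s by (simp add: norm_mult)
  ultimately have "r = s" by simp
  then have "exp (\<i> * complex_of_real a) = exp (\<i> * complex_of_real b)" using r s by simp
  then obtain n::int where e: "\<i> * complex_of_real a = \<i> * complex_of_real b + of_int (2 * n) * pi * \<i>"
    unfolding exp_eq by blast
  have "Im (\<i> * complex_of_real a) = Im (\<i> * complex_of_real b + of_int (2 * n) * pi * \<i>)"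
    by (simp only: e)
  then have "a = b + 2 * pi * of_int n" by simp
  then show ?thesis by (intro exI[of _ n]) simp
qed

lemma int_cases2pi: fixes k::int
  shows "2 * pi * of_int k \<le> -4 * pi \<or> 2 * pi * of_int k = -2 * pi \<or> 2 * pi * of_int k = 0 \<or> 2 * pi * of_int k = 2 * pi \<or> 2 * pi * of_int k \<ge> 4 * pi"
proof -
  have "k \<le> -2 \<or> k = -1 \<or> k = 0 \<or> k = 1 \<or> k \<ge> 2" by linarith
  then show ?thesis
  proof (elim disjE)
    assume "k \<le> -2" then have "real_of_int k \<le> -2" by simp
    then have "2 * pi * real_of_int k \<le> 2 * pi * (-2)" by (intro mult_left_mono) auto
    then show ?thesis by simp
  next
    assume "k \<ge> 2" then have "real_of_int k \<ge> 2" by simp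
    then have "2 * pi * real_of_int k \<ge> 2 * pi * 2" by (intro mult_left_mono) auto
    then show ?thesis by simp
  qed auto
qed



lemma substrate_Im: "z \<in> substrate \<Longrightarrow> Im z \<le> 0"
  unfolding substrate_def by auto

lemma substrate_pm1: "z \<in> substrate \<Longrightarrow> z + 1 \<in> substrate \<and> z - 1 \<in> substrate"
proof -
  assume "z \<in> substrate"
  then obtain m n :: int where z: "z = Complex (of_int m) (of_int n)" "n \<le> 0" unfolding substrate_def by auto
  have "z + 1 = Complex (of_int (m+1)) (of_int n)" "z - 1 = Complex (of_int (m - 1)) (of_int n)"
    using z by (auto simp: complex_eq_iff)
  then show ?thesis using z(2) unfolding substrate_def by blast
qed

lemma rep_cw: "a \<noteq> y \<Longrightarrow> c \<noteq> y \<Longrightarrow> rep ((a-y)/(c-y)) (cw_angle a y c)"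
  unfolding cw_ang by (rule rep_ang) auto

lemma cw_self: "cw_angle a x a = 0"
proof (cases "a = x")
  case True then show ?thesis by (simp add: cw_ang ang_def Arg_zero)
next
  case False then have "(a - x)/(a - x) = 1" by simp
  then show ?thesis by (simp add: cw_ang ang_def)
qed

lemma cw_bounds: "0 \<le> cw_angle a y c" "cw_angle a y c < 2*pi"
  unfolding cw_ang by (rule ang_bounds)+

locale setting =
  fixes \<epsilon> r0 :: real and V :: "complex set" and E :: "complex set set"
  assumes eps: "0 < \<epsilon>" "\<epsilon> \<le> pi / 39"
    and finV: "finite V"
    and upper: "\<forall>x \<in> V. Im x > 0"
    and graph: "E \<subseteq> {{x, y} | x y. x \<in> V \<and> y \<in> V \<and> x \<noteq> y}"
    and reg: "regular \<epsilon> r0 V E"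
    and excess: "\<forall>\<gamma> \<in> Gamma \<epsilon> V E. angle_excess \<gamma> < pi / 10 - 7 / 5 * \<epsilon>"
begin

definition allowed :: "real \<Rightarrow> bool" where
  "allowed t \<longleftrightarrow> t \<in> {pi/2 - \<epsilon> .. pi/2 + \<epsilon>} \<union> {pi - \<epsilon> .. pi + \<epsilon>} \<union> {3*pi/2 - \<epsilon> .. 3*pi/2 + \<epsilon>}"

definition opp :: "complex \<Rightarrow> complex \<Rightarrow> complex \<Rightarrow> bool" where
  "opp a x b \<longleftrightarrow> cw_angle a x b \<in> {pi - \<epsilon> .. pi + \<epsilon>}"

abbreviation N where "N x \<equiv> nbr V E x"
abbreviation sub where "sub x \<equiv> nbr_sub r0 x"
definition B where "B x = N x \<union> sub x"

lemma allowed_iff: "allowed t \<longleftrightarrow> (pi/2 - \<epsilon> \<le> t \<and> t \<le> pi/2 + \<epsilon>) \<or> (pi - \<epsilon> \<le> t \<and> t \<le> pi + \<epsilon>)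
   \<or> (3*pi/2 - \<epsilon> \<le> t \<and> t \<le> 3*pi/2 + \<epsilon>)"
  unfolding allowed_def by auto

lemma opp_iff: "opp a x b \<longleftrightarrow> pi - \<epsilon> \<le> cw_angle a x b \<and> cw_angle a x b \<le> pi + \<epsilon>"
  unfolding opp_def by auto

lemma perp_of: "allowed t \<Longrightarrow> \<not> opp a x b \<Longrightarrow> t = cw_angle a x b \<Longrightarrow>
   (pi/2 - \<epsilon> \<le> t \<and> t \<le> pi/2 + \<epsilon>) \<or> (3*pi/2 - \<epsilon> \<le> t \<and> t \<le> 3*pi/2 + \<epsilon>)"
  unfolding allowed_iff opp_iff by auto

lemma V_not_sub: "x \<in> V \<Longrightarrow> x \<notin> substrate"
  using upper substrate_Im by fastforce

lemma edgeD: "{a, b} \<in> E \<Longrightarrow> a \<in> V \<and> b \<in> V \<and> a \<noteq> b"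
  using graph by (auto simp: doubleton_eq_iff)

lemma N_iff: "y \<in> N x \<longleftrightarrow> y \<in> V \<and> {x, y} \<in> E"
  unfolding nbr_def by auto

lemma N_sym: "y \<in> N x \<Longrightarrow> x \<in> V \<Longrightarrow> x \<in> N y"
  unfolding nbr_def by (auto simp: insert_commute)

lemma finite_N: "finite (N x)"
  using finV unfolding nbr_def by auto

lemma reg_angle:
  assumes "x \<in> V \<union> substrate" "y \<in> V \<union> substrate" "z \<in> V \<union> substrate"
    "x \<noteq> y" "y \<noteq> z" "x \<noteq> z" "{x, y} \<in> bonds r0 V E" "{y, z} \<in> bonds r0 V E"
  shows "allowed (cw_angle x y z)"
  using reg assms unfolding regular_def allowed_def by blast

lemma B_props:
  assumes "x \<in> V" "a \<in> B x"
  shows "a \<in> V \<union> substrate" "a \<noteq> x" "{a, x} \<in> bonds r0 V E" "{x, a} \<in> bonds r0 V E"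
proof -
  show "a \<in> V \<union> substrate" "a \<noteq> x"
    using assms V_not_sub edgeD unfolding B_def nbr_def nbr_sub_def by auto
  have "{x, a} \<in> bonds r0 V E"
    using assms unfolding B_def nbr_def bonds_def by blast
  then show "{x, a} \<in> bonds r0 V E" "{a, x} \<in> bonds r0 V E" by (auto simp: insert_commute)
qed

lemma angle_B:
  assumes "x \<in> V" "a \<in> B x" "b \<in> B x" "a \<noteq> b"
  shows "allowed (cw_angle a x b)"
  using B_props[OF assms(1,2)] B_props[OF assms(1,3)] assms
  by (intro reg_angle) auto

lemma opp_sym:
  assumes "a \<noteq> x" "b \<noteq> x" "opp a x b"
  shows "opp b x a"
proof -
  have r1: "rep ((a-x)/(b-x)) (cw_angle a x b)" using assms by (intro rep_cw)
  have r2: "rep ((b-x)/(a-x)) (cw_angle b x a)" using assms by (intro rep_cw)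
  have "rep ((b-x)/(a-x)) (- cw_angle a x b)" using rep_inv[OF r1] by simp
  then obtain k::int where k: "cw_angle b x a = - cw_angle a x b + 2 * pi * of_int k"
    using rep_uniq[OF r2] by blast
  define m where "m = 2 * pi * of_int k"
  have mc: "m \<le> -4*pi \<or> m = -2*pi \<or> m = 0 \<or> m = 2*pi \<or> m \<ge> 4*pi" using int_cases2pi[of k] unfolding m_def .
  have h: "pi - \<epsilon> \<le> cw_angle a x b" "cw_angle a x b \<le> pi + \<epsilon>" using assms(3) unfolding opp_def by auto
  have k': "cw_angle b x a = - cw_angle a x b + m" using k m_def by simp
  from mc have "pi - \<epsilon> \<le> cw_angle b x a \<and> cw_angle b x a \<le> pi + \<epsilon>"
    using h k' cw_bounds[of b x a] eps pi_gt_zero by (elim disjE; intro conjI; linarith)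
  then show ?thesis unfolding opp_def by auto
qed

lemma small_angle_contra:
  assumes "x \<in> V" "a \<in> B x" "b \<in> B x" "a \<noteq> b" "rep ((a-x)/(b-x)) t" "\<bar>t\<bar> \<le> 3 * \<epsilon>"
  shows False
proof -
  have al: "allowed (cw_angle a x b)" using angle_B assms by blast
  have r: "rep ((a-x)/(b-x)) (cw_angle a x b)" using assms B_props by (intro rep_cw) auto
  obtain k::int where k: "cw_angle a x b = t + 2 * pi * of_int k" using rep_uniq[OF r assms(5)] by blast
  define m where "m = 2 * pi * of_int k"
  have mc: "m \<le> -4*pi \<or> m = -2*pi \<or> m = 0 \<or> m = 2*pi \<or> m \<ge> 4*pi" using int_cases2pi[of k] unfolding m_def .
  have k': "cw_angle a x b = t + m" using k m_def by simp
  have t: "-3*\<epsilon> \<le> t" "t \<le> 3*\<epsilon>" using assms(6) by auto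
  from mc al show False using k' t eps pi_gt_zero unfolding allowed_iff by (elim disjE conjE; linarith)
qed

lemma opp_unique:
  assumes "x \<in> V" "a \<in> B x" "b \<in> B x" "c \<in> B x" "b \<noteq> c" "opp a x b" "opp a x c"
  shows False
proof -
  have ab: "a \<noteq> b" "a \<noteq> c" using assms cw_self[of a x] eps pi_gt_zero unfolding opp_def by auto
  have r1: "rep ((a-x)/(b-x)) (cw_angle a x b)" using assms B_props by (intro rep_cw) auto
  have r2: "rep ((a-x)/(c-x)) (cw_angle a x c)" using assms B_props by (intro rep_cw) auto
  have ne: "a - x \<noteq> 0" using B_props assms by auto
  have ne2: "b - x \<noteq> 0" "c - x \<noteq> 0" using B_props assms by auto
  have eq: "((a-x)/(b-x)) / ((a-x)/(c-x)) = (c-x)/(b-x)" using ne ne2 by (simp add: divide_simps)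
  have "rep ((c-x)/(b-x)) (cw_angle a x b - cw_angle a x c)" using rep_div[OF r1 r2] unfolding eq .
  moreover have "\<bar>cw_angle a x b - cw_angle a x c\<bar> \<le> 3 * \<epsilon>" using assms(6,7) eps unfolding opp_def by auto
  moreover have "c \<noteq> b" using assms(5) by auto
  ultimately show False using small_angle_contra[OF assms(1,4,3)] by blast
qed

lemma three_opp:
  assumes "x \<in> V" "a \<in> B x" "b \<in> B x" "c \<in> B x" "a \<noteq> b" "b \<noteq> c" "a \<noteq> c"
  shows "opp a x b \<or> opp b x c \<or> opp a x c"
proof (rule ccontr)
  assume n: "\<not> (opp a x b \<or> opp b x c \<or> opp a x c)"
  have al: "allowed (cw_angle a x b)" "allowed (cw_angle b x c)" "allowed (cw_angle a x c)"
    using angle_B assms by blast+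
  have ne: "a \<noteq> x" "b \<noteq> x" "c \<noteq> x" using B_props assms by auto
  have r1: "rep ((a-x)/(b-x)) (cw_angle a x b)" using ne by (intro rep_cw) auto
  have r2: "rep ((b-x)/(c-x)) (cw_angle b x c)" using ne by (intro rep_cw) auto
  have r3: "rep ((a-x)/(c-x)) (cw_angle a x c)" using ne by (intro rep_cw) auto
  have ne2: "b - x \<noteq> 0" "c - x \<noteq> 0" using ne by auto
  have eq: "((a-x)/(b-x)) * ((b-x)/(c-x)) = (a-x)/(c-x)" using ne2 by (simp add: divide_simps)
  have "rep ((a-x)/(c-x)) (cw_angle a x b + cw_angle b x c)" using rep_mult[OF r1 r2] unfolding eq .
  then obtain k::int where k: "cw_angle a x c = cw_angle a x b + cw_angle b x c + 2 * pi * of_int k"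
    using rep_uniq[OF r3] by blast
  define m where "m = 2 * pi * of_int k"
  have mc: "m \<le> -4*pi \<or> m = -2*pi \<or> m = 0 \<or> m = 2*pi \<or> m \<ge> 4*pi" using int_cases2pi[of k] unfolding m_def .
  have k': "cw_angle a x c = cw_angle a x b + cw_angle b x c + m" using k m_def by simp
  have p1: "(pi/2 - \<epsilon> \<le> cw_angle a x b \<and> cw_angle a x b \<le> pi/2 + \<epsilon>) \<or> (3*pi/2 - \<epsilon> \<le> cw_angle a x b \<and> cw_angle a x b \<le> 3*pi/2 + \<epsilon>)"
    using perp_of[OF al(1)] n by blast
  have p2: "(pi/2 - \<epsilon> \<le> cw_angle b x c \<and> cw_angle b x c \<le> pi/2 + \<epsilon>) \<or> (3*pi/2 - \<epsilon> \<le> cw_angle b x c \<and> cw_angle b x c \<le> 3*pi/2 + \<epsilon>)"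
    using perp_of[OF al(2)] n by blast
  have p3: "(pi/2 - \<epsilon> \<le> cw_angle a x c \<and> cw_angle a x c \<le> pi/2 + \<epsilon>) \<or> (3*pi/2 - \<epsilon> \<le> cw_angle a x c \<and> cw_angle a x c \<le> 3*pi/2 + \<epsilon>)"
    using perp_of[OF al(3)] n by blast
  have e: "0 < \<epsilon>" "\<epsilon> \<le> pi/39" using eps by auto
  from mc p1 p2 p3 show False using k' e by (elim disjE conjE; linarith)
qed

lemma rep_Im: "rep w t \<Longrightarrow> Im w > 0 \<Longrightarrow> sin t > 0"
  unfolding rep_def
proof (elim exE conjE)
  fix r assume "r > 0" "w = complex_of_real r * exp (\<i> * complex_of_real t)" "Im w > 0"
  then have "Im w = r * sin t" by (simp add: Im_exp)
  then show "sin t > 0" using \<open>r > 0\<close> \<open>Im w > 0\<close> by (simp add: zero_less_mult_iff)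
qed

lemma dir_sub:
  assumes "x \<in> V" "z \<in> sub x"
  shows "\<exists>\<phi>. rep (x - z) \<phi> \<and> pi/2 - \<epsilon> \<le> \<phi> \<and> \<phi> \<le> pi/2 + \<epsilon>"
proof -
  have zs: "z \<in> substrate" using assms unfolding nbr_sub_def by auto
  have p1: "z + 1 \<in> substrate" "z - 1 \<in> substrate" using substrate_pm1[OF zs] by auto
  have xz: "x \<noteq> z" "x \<noteq> z + 1" "x \<noteq> z - 1" using V_not_sub assms(1) zs p1 by auto
  have bxz: "{x, z} \<in> bonds r0 V E" using assms unfolding bonds_def by blast
  have "{z, z + 1} \<in> {{z, z'} | z z'. z \<in> substrate \<and> z' \<in> substrate \<and> cmod (z - z') = 1}"
    using zs p1 by (intro CollectI exI[of _ z] exI[of _ "z+1"]) auto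
  moreover have "{z, z - 1} \<in> {{z, z'} | z z'. z \<in> substrate \<and> z' \<in> substrate \<and> cmod (z - z') = 1}"
    using zs p1 by (intro CollectI exI[of _ z] exI[of _ "z-1"]) auto
  ultimately have b1: "{z, z + 1} \<in> bonds r0 V E" "{z, z - 1} \<in> bonds r0 V E"
    unfolding bonds_def by blast+
  have a1: "allowed (cw_angle x z (z+1))" using assms(1) zs p1 xz bxz b1 by (intro reg_angle) auto
  have a2: "allowed (cw_angle x z (z-1))" using assms(1) zs p1 xz bxz b1 by (intro reg_angle) auto
  have r1: "rep (x - z) (cw_angle x z (z+1))" using rep_cw[of x z "z+1"] xz by simp
  have "rep (-(x - z)) (cw_angle x z (z-1))" using rep_cw[of x z "z-1"] xz by simp
  then have r2: "rep (x - z) (cw_angle x z (z-1) + pi)" using rep_neg by fastforce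
  obtain k::int where k: "cw_angle x z (z+1) = cw_angle x z (z-1) + pi + 2 * pi * of_int k"
    using rep_uniq[OF r1 r2] by blast
  have "Im (x - z) > 0" using upper assms(1) substrate_Im[OF zs] by auto
  then have s: "sin (cw_angle x z (z+1)) > 0" using rep_Im[OF r1] by auto
  have "cw_angle x z (z+1) < pi"
  proof (rule ccontr)
    assume "\<not> ?thesis"
    then show False using sin_le_zero[of "cw_angle x z (z+1)"] cw_bounds s by auto
  qed
  then have "pi/2 - \<epsilon> \<le> cw_angle x z (z+1) \<and> cw_angle x z (z+1) \<le> pi/2 + \<epsilon>"
  proof -
    define m where "m = 2 * pi * of_int k"
    have mc: "m \<le> -4*pi \<or> m = -2*pi \<or> m = 0 \<or> m = 2*pi \<or> m \<ge> 4*pi" using int_cases2pi[of k] unfolding m_def .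
    have k': "cw_angle x z (z+1) = cw_angle x z (z-1) + pi + m" using k m_def by simp
    from mc a1 a2 show ?thesis using k' \<open>cw_angle x z (z+1) < pi\<close> eps pi_gt_zero cw_bounds[of x z "z-1"] cw_bounds[of x z "z+1"]
      unfolding allowed_iff by (elim disjE conjE; intro conjI; linarith)
  qed
  then show ?thesis using r1 by blast
qed

lemma sub_unique:
  assumes "x \<in> V" "z1 \<in> sub x" "z2 \<in> sub x"
  shows "z1 = z2"
proof (rule ccontr)
  assume ne: "z1 \<noteq> z2"
  obtain p1 where p1: "rep (x - z1) p1" "pi/2 - \<epsilon> \<le> p1" "p1 \<le> pi/2 + \<epsilon>" using dir_sub assms by blast
  obtain p2 where p2: "rep (x - z2) p2" "pi/2 - \<epsilon> \<le> p2" "p2 \<le> pi/2 + \<epsilon>" using dir_sub assms by blast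
  have eq: "(x - z1)/(x - z2) = (z1 - x)/(z2 - x)" by (metis minus_diff_eq minus_divide_divide)
  have r: "rep ((z1 - x)/(z2 - x)) (p1 - p2)" using rep_div[OF p1(1) p2(1)] unfolding eq .
  have "\<bar>p1 - p2\<bar> \<le> 3 * \<epsilon>" using p1 p2 eps by auto
  moreover have "z1 \<in> B x" "z2 \<in> B x" using assms unfolding B_def by auto
  ultimately show False using small_angle_contra[OF assms(1) _ _ ne r] by blast
qed

end


context setting begin

definition dd :: "complex list \<Rightarrow> nat \<Rightarrow> complex" where
  "dd \<gamma> k = \<gamma> ! Suc k - \<gamma> ! k"

definition SS :: "complex list \<Rightarrow> nat \<Rightarrow> real" where
  "SS \<gamma> k = (\<Sum>i\<in>{1..k}. cw_angle (\<gamma> ! Suc i) (\<gamma> ! i) (\<gamma> ! (i - 1)) - pi)"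

lemma sp_edge: "straight_path \<epsilon> V E \<gamma> \<Longrightarrow> Suc i < length \<gamma> \<Longrightarrow> {\<gamma> ! i, \<gamma> ! Suc i} \<in> E"
  unfolding straight_path_def by blast

lemma sp_dd_nz: "straight_path \<epsilon> V E \<gamma> \<Longrightarrow> Suc i < length \<gamma> \<Longrightarrow> dd \<gamma> i \<noteq> 0"
  using sp_edge edgeD unfolding dd_def by fastforce

lemma sp_angle: "straight_path \<epsilon> V E \<gamma> \<Longrightarrow> 0 < i \<Longrightarrow> Suc i < length \<gamma> \<Longrightarrow>
   cw_angle (\<gamma> ! Suc i) (\<gamma> ! i) (\<gamma> ! (i - 1)) \<in> {pi - \<epsilon> .. pi + \<epsilon>}"
  unfolding straight_path_def by blast

lemma turn:
  assumes sp: "straight_path \<epsilon> V E \<gamma>"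
  shows "Suc k < length \<gamma> \<Longrightarrow> rep (dd \<gamma> k / dd \<gamma> 0) (SS \<gamma> k)"
proof (induction k)
  case 0
  have "dd \<gamma> 0 \<noteq> 0" using sp_dd_nz[OF sp] 0 by auto
  then show ?case using rep_pos[of 1] by (simp add: SS_def)
next
  case (Suc k)
  have IH: "rep (dd \<gamma> k / dd \<gamma> 0) (SS \<gamma> k)" using Suc by auto
  have nz: "dd \<gamma> k \<noteq> 0" "dd \<gamma> (Suc k) \<noteq> 0" using sp_dd_nz[OF sp] Suc.prems by auto
  have ne: "\<gamma> ! Suc (Suc k) \<noteq> \<gamma> ! Suc k" "\<gamma> ! k \<noteq> \<gamma> ! Suc k" using nz unfolding dd_def by auto
  let ?c = "cw_angle (\<gamma> ! Suc (Suc k)) (\<gamma> ! Suc k) (\<gamma> ! k)"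
  have "rep ((\<gamma> ! Suc (Suc k) - \<gamma> ! Suc k) / (\<gamma> ! k - \<gamma> ! Suc k)) ?c" using rep_cw ne by blast
  moreover have "(\<gamma> ! Suc (Suc k) - \<gamma> ! Suc k) / (\<gamma> ! k - \<gamma> ! Suc k) = - (dd \<gamma> (Suc k) / dd \<gamma> k)"
    unfolding dd_def by (metis minus_diff_eq divide_minus_right)
  ultimately have "rep (- (dd \<gamma> (Suc k) / dd \<gamma> k)) ?c" by simp
  then have "rep (dd \<gamma> (Suc k) / dd \<gamma> k) (?c + pi)" using rep_neg by fastforce
  then have "rep (dd \<gamma> (Suc k) / dd \<gamma> k) (?c + pi + 2 * pi * of_int (-1))" by (rule rep_shift)
  then have r: "rep (dd \<gamma> (Suc k) / dd \<gamma> k) (?c - pi)" by simp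
  have eq: "(dd \<gamma> (Suc k) / dd \<gamma> k) * (dd \<gamma> k / dd \<gamma> 0) = dd \<gamma> (Suc k) / dd \<gamma> 0"
    using nz by simp
  have "rep (dd \<gamma> (Suc k) / dd \<gamma> 0) ((?c - pi) + SS \<gamma> k)" using rep_mult[OF r IH] unfolding eq .
  moreover have "SS \<gamma> (Suc k) = SS \<gamma> k + (?c - pi)" unfolding SS_def by simp
  ultimately show ?case by (simp add: add.commute)
qed

lemma SS_bound:
  assumes sp: "straight_path \<epsilon> V E \<gamma>" and k: "Suc k < length \<gamma>"
  shows "\<bar>SS \<gamma> k\<bar> < pi / 10 - 7 / 5 * \<epsilon>"
proof -
  have "\<bar>SS \<gamma> k\<bar> \<le> (\<Sum>i\<in>{1..k}. \<bar>cw_angle (\<gamma> ! Suc i) (\<gamma> ! i) (\<gamma> ! (i - 1)) - pi\<bar>)"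
    unfolding SS_def by (rule sum_abs)
  also have "\<dots> \<le> (\<Sum>i\<in>{1..<length \<gamma> - 1}. \<bar>cw_angle (\<gamma> ! Suc i) (\<gamma> ! i) (\<gamma> ! (i - 1)) - pi\<bar>)"
    using k by (intro sum_mono2) auto
  also have "\<dots> = angle_excess \<gamma>" unfolding angle_excess_def by simp
  also have "\<dots> < pi / 10 - 7 / 5 * \<epsilon>" using excess sp unfolding Gamma_def by auto
  finally show ?thesis .
qed

lemma Re_pos:
  assumes sp: "straight_path \<epsilon> V E \<gamma>" and k: "Suc k < length \<gamma>"
  shows "Re (dd \<gamma> k * cnj (dd \<gamma> 0)) > 0"
proof -
  obtain \<rho> where r: "\<rho> > 0" "dd \<gamma> k / dd \<gamma> 0 = complex_of_real \<rho> * exp (\<i> * complex_of_real (SS \<gamma> k))"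
    using turn[OF sp k] unfolding rep_def by blast
  have nz: "dd \<gamma> 0 \<noteq> 0" using sp_dd_nz[OF sp] k by auto
  have "dd \<gamma> k = complex_of_real \<rho> * exp (\<i> * complex_of_real (SS \<gamma> k)) * dd \<gamma> 0"
    using r(2) nz by (simp add: divide_eq_eq)
  then have "dd \<gamma> k * cnj (dd \<gamma> 0) = complex_of_real \<rho> * exp (\<i> * complex_of_real (SS \<gamma> k)) * (dd \<gamma> 0 * cnj (dd \<gamma> 0))"
    by (simp add: mult.assoc)
  also have "\<dots> = complex_of_real \<rho> * exp (\<i> * complex_of_real (SS \<gamma> k)) * complex_of_real ((cmod (dd \<gamma> 0))\<^sup>2)"
    by (simp only: complex_norm_square)
  also have "\<dots> = complex_of_real (\<rho> * (cmod (dd \<gamma> 0))\<^sup>2) * exp (\<i> * complex_of_real (SS \<gamma> k))"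
    by (simp add: mult.commute mult.left_commute)
  finally have "Re (dd \<gamma> k * cnj (dd \<gamma> 0)) = \<rho> * (cmod (dd \<gamma> 0))\<^sup>2 * cos (SS \<gamma> k)"
    by (simp add: Re_exp)
  moreover have "cos (SS \<gamma> k) > 0" using SS_bound[OF sp k] eps by (intro cos_gt_zero_pi) auto
  moreover have "cmod (dd \<gamma> 0) > 0" using nz by simp
  ultimately show ?thesis using r(1) by simp
qed

lemma sp_distinct:
  assumes sp: "straight_path \<epsilon> V E \<gamma>"
  shows "distinct \<gamma>"
proof -
  have key: "i < j \<Longrightarrow> j < length \<gamma> \<Longrightarrow> Re ((\<gamma> ! j - \<gamma> ! i) * cnj (dd \<gamma> 0)) > 0" for i j
  proof (induction j)
    case 0 then show ?case by simp
  next
    case (Suc j)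
    show ?case
    proof (cases "j = i")
      case True
      then show ?thesis using Re_pos[OF sp, of i] Suc.prems unfolding dd_def by simp
    next
      case False
      then have "Re ((\<gamma> ! j - \<gamma> ! i) * cnj (dd \<gamma> 0)) > 0" using Suc by auto
      moreover have "Re (dd \<gamma> j * cnj (dd \<gamma> 0)) > 0" using Re_pos[OF sp, of j] Suc.prems by simp
      moreover have "(\<gamma> ! Suc j - \<gamma> ! i) * cnj (dd \<gamma> 0) = dd \<gamma> j * cnj (dd \<gamma> 0) + (\<gamma> ! j - \<gamma> ! i) * cnj (dd \<gamma> 0)"
        unfolding dd_def by (simp add: algebra_simps)
      moreover have "Re (X + Y) > 0" if "Re X > 0" "Re Y > 0" for X Y using that by simp
      ultimately show ?thesis by metis
    qed
  qed
  show ?thesis unfolding distinct_conv_nth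
  proof (intro allI impI)
    fix i j assume "i < length \<gamma>" "j < length \<gamma>" "i \<noteq> j"
    then show "\<gamma> ! i \<noteq> \<gamma> ! j" using key[of i j] key[of j i] by (cases "i < j") auto
  qed
qed

lemma sp_len: "straight_path \<epsilon> V E \<gamma> \<Longrightarrow> length \<gamma> \<ge> 2"
  unfolding straight_path_def by auto

lemma sp_set: "straight_path \<epsilon> V E \<gamma> \<Longrightarrow> set \<gamma> \<subseteq> V"
  unfolding straight_path_def by auto

lemma geo_ends:
  assumes sp: "straight_path \<epsilon> V E \<gamma>" and n: "n = length \<gamma>"
    and z: "z \<in> sub (\<gamma> ! 0)" and z': "z' \<in> sub (\<gamma> ! (n - 1))"
    and o: "opp z' (\<gamma> ! (n - 1)) (\<gamma> ! (n - 2))"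
  shows False
proof -
  have n2: "n \<ge> 2" using sp_len[OF sp] n by auto
  define m where "m = n - 2"
  have mm: "Suc m < length \<gamma>" "n - 1 = Suc m" "n - 2 = m" using n2 n unfolding m_def by auto
  have "\<gamma> ! 0 \<in> set \<gamma>" "\<gamma> ! Suc m \<in> set \<gamma>" using mm by (auto intro!: nth_mem)
  then have x0V: "\<gamma> ! 0 \<in> V" "\<gamma> ! Suc m \<in> V" using sp_set[OF sp] by auto
  have e01: "{\<gamma> ! 0, \<gamma> ! 1} \<in> E" using sp_edge[OF sp, of 0] n2 n by auto
  have em: "{\<gamma> ! m, \<gamma> ! Suc m} \<in> E" using sp_edge[OF sp, of m] mm by auto
  have nz0: "dd \<gamma> 0 \<noteq> 0" "dd \<gamma> m \<noteq> 0" using sp_dd_nz[OF sp] mm by auto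
  obtain \<phi> where ph: "rep (\<gamma> ! 0 - z) \<phi>" "pi/2 - \<epsilon> \<le> \<phi>" "\<phi> \<le> pi/2 + \<epsilon>" using dir_sub x0V z by blast
  obtain \<phi>' where ph': "rep (\<gamma> ! Suc m - z') \<phi>'" "pi/2 - \<epsilon> \<le> \<phi>'" "\<phi>' \<le> pi/2 + \<epsilon>"
    using dir_sub x0V z' mm by auto
  have zB: "z \<in> B (\<gamma> ! 0)" "\<gamma> ! 1 \<in> B (\<gamma> ! 0)" using z e01 edgeD[OF e01] unfolding B_def nbr_def by auto
  have zne: "z \<noteq> \<gamma> ! 1" using zB(2) z V_not_sub edgeD[OF e01] unfolding nbr_sub_def by auto
  let ?t = "cw_angle z (\<gamma> ! 0) (\<gamma> ! 1)"
  have al: "allowed ?t" using angle_B[OF x0V(1) zB zne] .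
  have zn0: "z \<noteq> \<gamma> ! 0" "\<gamma> ! 1 \<noteq> \<gamma> ! 0" using B_props[OF x0V(1)] zB by auto
  have rt: "rep ((z - \<gamma> ! 0) / dd \<gamma> 0) ?t" using rep_cw[OF zn0] unfolding dd_def by simp
  let ?u = "cw_angle z' (\<gamma> ! Suc m) (\<gamma> ! m)"
  have ou: "pi - \<epsilon> \<le> ?u" "?u \<le> pi + \<epsilon>" using o mm unfolding opp_iff by auto
  have z'n: "z' \<noteq> \<gamma> ! Suc m" "\<gamma> ! m \<noteq> \<gamma> ! Suc m" using V_not_sub x0V z' mm edgeD[OF em]
    unfolding nbr_sub_def by auto
  have ru0: "rep ((z' - \<gamma> ! Suc m) / (\<gamma> ! m - \<gamma> ! Suc m)) ?u" using rep_cw[OF z'n] .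
  have "(z' - \<gamma> ! Suc m) / (\<gamma> ! m - \<gamma> ! Suc m) = (\<gamma> ! Suc m - z') / dd \<gamma> m"
    unfolding dd_def by (metis minus_diff_eq minus_divide_divide)
  then have ru: "rep ((\<gamma> ! Suc m - z') / dd \<gamma> m) ?u" using ru0 by simp
  have "rep (- (\<gamma> ! 0 - z)) (\<phi> + pi)" using rep_neg[OF ph(1)] .
  then have rz: "rep (z - \<gamma> ! 0) (\<phi> + pi)" by simp
  have eq1: "(z - \<gamma> ! 0) / ((z - \<gamma> ! 0) / dd \<gamma> 0) = dd \<gamma> 0" using nz0 zn0 by simp
  have r0: "rep (dd \<gamma> 0) (\<phi> + pi - ?t)" using rep_div[OF rz rt] unfolding eq1 .
  have z'n2: "\<gamma> ! Suc m - z' \<noteq> 0" using z'n by auto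
  have eq2: "(\<gamma> ! Suc m - z') / ((\<gamma> ! Suc m - z') / dd \<gamma> m) = dd \<gamma> m" using nz0 z'n2 by simp
  have rm: "rep (dd \<gamma> m) (\<phi>' - ?u)" using rep_div[OF ph'(1) ru] unfolding eq2 .
  have r1: "rep (dd \<gamma> m / dd \<gamma> 0) ((\<phi>' - ?u) - (\<phi> + pi - ?t))" using rep_div[OF rm r0] .
  obtain k::int where k: "(\<phi>' - ?u) - (\<phi> + pi - ?t) = SS \<gamma> m + 2 * pi * of_int k"
    using rep_uniq[OF r1 turn[OF sp mm(1)]] by blast
  have sb: "\<bar>SS \<gamma> m\<bar> < pi / 10 - 7 / 5 * \<epsilon>" using SS_bound[OF sp mm(1)] .
  define M where "M = 2 * pi * of_int k"
  have mc: "M \<le> -4*pi \<or> M = -2*pi \<or> M = 0 \<or> M = 2*pi \<or> M \<ge> 4*pi" using int_cases2pi[of k] unfolding M_def .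
  have k': "(\<phi>' - ?u) - (\<phi> + pi - ?t) = SS \<gamma> m + M" using k M_def by simp
  have sb': "- (pi / 10 - 7 / 5 * \<epsilon>) < SS \<gamma> m" "SS \<gamma> m < pi / 10 - 7 / 5 * \<epsilon>" using sb by auto
  have e: "0 < \<epsilon>" "\<epsilon> \<le> pi/39" using eps by auto
  have tb: "0 \<le> ?t" "?t < 2 * pi" using cw_bounds by auto
  have L: "?t - M > 2*pi - pi/10 - 8/5*\<epsilon>" using k' sb' ph(2,3) ph'(2,3) ou by linarith
  have U: "?t - M < 2*pi + pi/10 + 8/5*\<epsilon>" using k' sb' ph(2,3) ph'(2,3) ou by linarith
  from mc al show False unfolding allowed_iff
    using L U e tb by (elim disjE conjE; linarith)
qed

end


context setting begin

abbreviation sp where "sp \<gamma> \<equiv> straight_path \<epsilon> V E \<gamma>"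

lemma edges_distinct_of_distinct:
  assumes "distinct \<gamma>"
  shows "\<forall>i j. Suc i < length \<gamma> \<and> Suc j < length \<gamma> \<and> i \<noteq> j \<longrightarrow>
        {\<gamma> ! i, \<gamma> ! Suc i} \<noteq> {\<gamma> ! j, \<gamma> ! Suc j}"
proof (intro allI impI)
  fix i j assume h: "Suc i < length \<gamma> \<and> Suc j < length \<gamma> \<and> i \<noteq> j"
  have inj: "\<And>p q. p < length \<gamma> \<Longrightarrow> q < length \<gamma> \<Longrightarrow> \<gamma> ! p = \<gamma> ! q \<Longrightarrow> p = q"
    using assms nth_eq_iff_index_eq by blast
  show "{\<gamma> ! i, \<gamma> ! Suc i} \<noteq> {\<gamma> ! j, \<gamma> ! Suc j}"
  proof
    assume "{\<gamma> ! i, \<gamma> ! Suc i} = {\<gamma> ! j, \<gamma> ! Suc j}"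
    then have "(\<gamma> ! i = \<gamma> ! j \<and> \<gamma> ! Suc i = \<gamma> ! Suc j) \<or> (\<gamma> ! i = \<gamma> ! Suc j \<and> \<gamma> ! Suc i = \<gamma> ! j)"
      by (auto simp: doubleton_eq_iff)
    then show False
    proof
      assume "\<gamma> ! i = \<gamma> ! j \<and> \<gamma> ! Suc i = \<gamma> ! Suc j"
      then have "i = j" using inj h by auto
      then show False using h by auto
    next
      assume a: "\<gamma> ! i = \<gamma> ! Suc j \<and> \<gamma> ! Suc i = \<gamma> ! j"
      then have "i = Suc j" "Suc i = j" using inj[of i "Suc j"] inj[of "Suc i" j] h by auto
      then show False by auto
    qed
  qed
qed

lemma sp_intro:
  assumes "length \<gamma> \<ge> 2" "set \<gamma> \<subseteq> V" "\<And>i. Suc i < length \<gamma> \<Longrightarrow> {\<gamma> ! i, \<gamma> ! Suc i} \<in> E"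
    "\<And>i. 0 < i \<Longrightarrow> Suc i < length \<gamma> \<Longrightarrow> opp (\<gamma> ! Suc i) (\<gamma> ! i) (\<gamma> ! (i - 1))"
    "distinct \<gamma>"
  shows "sp \<gamma>"
proof -
  have "\<forall>i. 0 < i \<and> Suc i < length \<gamma> \<longrightarrow> cw_angle (\<gamma> ! Suc i) (\<gamma> ! i) (\<gamma> ! (i - 1)) \<in> {pi - \<epsilon>..pi + \<epsilon>}"
    using assms(4) unfolding opp_def by blast
  moreover have "\<forall>i. Suc i < length \<gamma> \<longrightarrow> {\<gamma> ! i, \<gamma> ! Suc i} \<in> E" using assms(3) by blast
  ultimately show ?thesis unfolding straight_path_def using assms(1,2) edges_distinct_of_distinct[OF assms(5)]
    by (intro conjI) assumption+
qed

lemma sp_opp: "sp \<gamma> \<Longrightarrow> 0 < i \<Longrightarrow> Suc i < length \<gamma> \<Longrightarrow> opp (\<gamma> ! Suc i) (\<gamma> ! i) (\<gamma> ! (i - 1))"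
  unfolding opp_def by (rule sp_angle)

lemma sp_nth_V: "sp \<gamma> \<Longrightarrow> i < length \<gamma> \<Longrightarrow> \<gamma> ! i \<in> V"
  using sp_set nth_mem by blast

lemma sp_rev:
  assumes sp: "sp \<gamma>"
  shows "sp (rev \<gamma>)"
proof (rule sp_intro)
  let ?n = "length \<gamma>"
  have d: "distinct \<gamma>" using sp_distinct[OF sp] .
  show "length (rev \<gamma>) \<ge> 2" using sp_len[OF sp] by simp
  show "set (rev \<gamma>) \<subseteq> V" using sp_set[OF sp] by simp
  show "distinct (rev \<gamma>)" using d by simp
  fix i
  show "Suc i < length (rev \<gamma>) \<Longrightarrow> {rev \<gamma> ! i, rev \<gamma> ! Suc i} \<in> E"
  proof -
    assume i: "Suc i < length (rev \<gamma>)"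
    define j where "j = ?n - Suc (Suc i)"
    have e: "rev \<gamma> ! i = \<gamma> ! Suc j" "rev \<gamma> ! Suc i = \<gamma> ! j" "Suc j < ?n"
      using i unfolding j_def by (auto simp: rev_nth Suc_diff_Suc)
    then show ?thesis using sp_edge[OF sp, of j] by (simp add: insert_commute)
  qed
  show "0 < i \<Longrightarrow> Suc i < length (rev \<gamma>) \<Longrightarrow> opp (rev \<gamma> ! Suc i) (rev \<gamma> ! i) (rev \<gamma> ! (i - 1))"
  proof -
    assume i: "0 < i" "Suc i < length (rev \<gamma>)"
    define j where "j = ?n - Suc i"
    have e: "rev \<gamma> ! Suc i = \<gamma> ! (j - 1)" "rev \<gamma> ! i = \<gamma> ! j" "rev \<gamma> ! (i - 1) = \<gamma> ! Suc j"
      "0 < j" "Suc j < ?n"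
      using i unfolding j_def by (auto simp: rev_nth Suc_diff_Suc)
    have o: "opp (\<gamma> ! Suc j) (\<gamma> ! j) (\<gamma> ! (j - 1))" using sp_opp[OF sp e(4,5)] .
    have ne: "\<gamma> ! Suc j \<noteq> \<gamma> ! j" "\<gamma> ! (j - 1) \<noteq> \<gamma> ! j"
      using d e(4,5) by (auto simp: nth_eq_iff_index_eq)
    show ?thesis unfolding e(1,2,3) using opp_sym[OF ne o] .
  qed
qed

lemma sp_take:
  assumes sp: "sp \<gamma>" and l: "2 \<le> l" "l \<le> length \<gamma>"
  shows "sp (take l \<gamma>)"
proof (rule sp_intro)
  show "length (take l \<gamma>) \<ge> 2" using l by simp
  show "set (take l \<gamma>) \<subseteq> V" by (rule order_trans[OF set_take_subset sp_set[OF sp]])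
  show "distinct (take l \<gamma>)" using sp_distinct[OF sp] by simp
  fix i
  show "Suc i < length (take l \<gamma>) \<Longrightarrow> {take l \<gamma> ! i, take l \<gamma> ! Suc i} \<in> E"
  proof -
    assume "Suc i < length (take l \<gamma>)"
    then have i: "Suc i < l" "Suc i < length \<gamma>" by auto
    then show ?thesis using sp_edge[OF sp i(2)] by (simp add: nth_take)
  qed
  show "0 < i \<Longrightarrow> Suc i < length (take l \<gamma>) \<Longrightarrow> opp (take l \<gamma> ! Suc i) (take l \<gamma> ! i) (take l \<gamma> ! (i - 1))"
  proof -
    assume "0 < i" "Suc i < length (take l \<gamma>)"
    then have i: "0 < i" "Suc i < l" "Suc i < length \<gamma>" by auto
    then show ?thesis using sp_opp[OF sp i(1,3)] by (simp add: nth_take)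
  qed
qed

lemma sp_drop:
  assumes sp: "sp \<gamma>" and l: "k + 2 \<le> length \<gamma>"
  shows "sp (drop k \<gamma>)"
proof (rule sp_intro)
  show "length (drop k \<gamma>) \<ge> 2" using l by simp
  show "set (drop k \<gamma>) \<subseteq> V" by (rule order_trans[OF set_drop_subset sp_set[OF sp]])
  show "distinct (drop k \<gamma>)" using sp_distinct[OF sp] by simp
  fix i
  show "Suc i < length (drop k \<gamma>) \<Longrightarrow> {drop k \<gamma> ! i, drop k \<gamma> ! Suc i} \<in> E"
    using sp_edge[OF sp, of "k + i"] by auto
  show "0 < i \<Longrightarrow> Suc i < length (drop k \<gamma>) \<Longrightarrow> opp (drop k \<gamma> ! Suc i) (drop k \<gamma> ! i) (drop k \<gamma> ! (i - 1))"
  proof -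
    assume i: "0 < i" "Suc i < length (drop k \<gamma>)"
    have "opp (\<gamma> ! Suc (k + i)) (\<gamma> ! (k + i)) (\<gamma> ! (k + i - 1))" using sp_opp[OF sp, of "k+i"] i by auto
    moreover have "k + i - 1 = k + (i - 1)" using i by auto
    ultimately show ?thesis using i by auto
  qed
qed

lemma sp_window:
  assumes sp: "sp (a @ w @ b)" and l: "length w \<ge> 2"
  shows "sp w"
proof -
  have "drop (length a) (a @ w @ b) = w @ b" by simp
  then have "sp (w @ b)" using sp_drop[OF sp, of "length a"] l by auto
  then have "sp (take (length w) (w @ b))" using sp_take[of "w @ b" "length w"] l by auto
  then show ?thesis by simp
qed

lemma sp_two: "{x, y} \<in> E \<Longrightarrow> sp [x, y]"
  using edgeD[of x y] by (intro sp_intro) (auto simp: less_Suc_eq nth_Cons')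

lemma sp_snoc:
  assumes sp: "sp \<gamma>" and e: "{last \<gamma>, w} \<in> E"
    and o: "opp w (last \<gamma>) (\<gamma> ! (length \<gamma> - 2))"
  shows "sp (\<gamma> @ [w])"
proof -
  let ?n = "length \<gamma>"
  have n2: "?n \<ge> 2" using sp_len[OF sp] .
  have ne: "\<gamma> \<noteq> []" using n2 by auto
  have last: "last \<gamma> = \<gamma> ! (?n - 1)" using ne by (simp add: last_conv_nth)
  have d: "distinct \<gamma>" using sp_distinct[OF sp] .
  have wV: "w \<in> V" using edgeD[OF e] by auto
  have nth1: "(\<gamma> @ [w]) ! i = \<gamma> ! i" if "i < ?n" for i using that by (simp add: nth_append)
  have nth2: "(\<gamma> @ [w]) ! ?n = w" by simp
  have edges: "{(\<gamma> @ [w]) ! i, (\<gamma> @ [w]) ! Suc i} \<in> E" if "Suc i < length (\<gamma> @ [w])" for i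
  proof (cases "Suc i < ?n")
    case True then show ?thesis using sp_edge[OF sp, of i] nth1 by auto
  next
    case False then have "i = ?n - 1" "Suc i = ?n" using that n2 by auto
    then show ?thesis using e last nth1[of i] nth2 n2 by auto
  qed
  have angles: "cw_angle ((\<gamma> @ [w]) ! Suc i) ((\<gamma> @ [w]) ! i) ((\<gamma> @ [w]) ! (i - 1)) \<in> {pi - \<epsilon>..pi + \<epsilon>}"
    if "0 < i" "Suc i < length (\<gamma> @ [w])" for i
  proof (cases "Suc i < ?n")
    case True then show ?thesis using sp_angle[OF sp, of i] nth1 that by auto
  next
    case False then have "i = ?n - 1" "Suc i = ?n" using that n2 by auto
    moreover have "?n - 1 - 1 = ?n - 2" by auto
    ultimately show ?thesis using o last nth1[of i] nth1[of "i - 1"] nth2 n2 unfolding opp_def by auto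
  qed
  have ed: "{(\<gamma> @ [w]) ! i, (\<gamma> @ [w]) ! Suc i} \<noteq> {(\<gamma> @ [w]) ! j, (\<gamma> @ [w]) ! Suc j}"
    if h: "Suc i < length (\<gamma> @ [w])" "Suc j < length (\<gamma> @ [w])" "i \<noteq> j" for i j
  proof -
    have gen: "{\<gamma> ! (?n - 1), w} \<noteq> {\<gamma> ! p, \<gamma> ! Suc p}" if p: "Suc p < ?n" for p
    proof
      assume eq: "{\<gamma> ! (?n - 1), w} = {\<gamma> ! p, \<gamma> ! Suc p}"
      then have "\<gamma> ! (?n - 1) = \<gamma> ! p \<or> \<gamma> ! (?n - 1) = \<gamma> ! Suc p" by (auto simp: doubleton_eq_iff)
      then have "?n - 1 = p \<or> ?n - 1 = Suc p" using d p n2 by (auto simp: nth_eq_iff_index_eq)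
      then have pp: "p = ?n - 2" using p by auto
      then have sp1: "Suc p = ?n - 1" using n2 by auto
      have "\<gamma> ! (?n - 1) \<noteq> \<gamma> ! (?n - 2)" using d n2 by (auto simp: nth_eq_iff_index_eq)
      then have eq': "{\<gamma> ! (?n - 1), w} = {\<gamma> ! (?n - 2), \<gamma> ! (?n - 1)}" using eq pp sp1 by simp
      have "w = \<gamma> ! (?n - 2)" using eq' \<open>\<gamma> ! (?n - 1) \<noteq> \<gamma> ! (?n - 2)\<close> by (auto simp: doubleton_eq_iff)
      then have "opp (\<gamma> ! (?n - 2)) (last \<gamma>) (\<gamma> ! (?n - 2))" using o by simp
      then show False using cw_self eps pi_gt_zero unfolding opp_def by auto
    qed
    show ?thesis
    proof (cases "Suc i < ?n \<and> Suc j < ?n")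
      case True
      have "{\<gamma> ! i, \<gamma> ! Suc i} \<noteq> {\<gamma> ! j, \<gamma> ! Suc j}" using edges_distinct_of_distinct[OF d] True h(3) by blast
      then show ?thesis using nth1[of i] nth1[of "Suc i"] nth1[of j] nth1[of "Suc j"] True by simp
    next
      case False
      then have "(i = ?n - 1 \<and> Suc j < ?n) \<or> (j = ?n - 1 \<and> Suc i < ?n)" using h n2 by auto
      then show ?thesis
      proof
        assume a: "i = ?n - 1 \<and> Suc j < ?n"
        then have "(\<gamma> @ [w]) ! i = \<gamma> ! (?n - 1)" "(\<gamma> @ [w]) ! Suc i = w" using a n2 by (auto simp: nth_append)
        then show ?thesis using gen[of j] a nth1 by auto
      next
        assume a: "j = ?n - 1 \<and> Suc i < ?n"
        then have "(\<gamma> @ [w]) ! j = \<gamma> ! (?n - 1)" "(\<gamma> @ [w]) ! Suc j = w" using a n2 by (auto simp: nth_append)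
        then show ?thesis using gen[of i] a nth1 by auto
      qed
    qed
  qed
  have "2 \<le> length (\<gamma> @ [w])" using n2 by simp
  moreover have "set (\<gamma> @ [w]) \<subseteq> V" using sp_set[OF sp] wV by simp
  moreover have "\<forall>i. Suc i < length (\<gamma> @ [w]) \<longrightarrow> {(\<gamma> @ [w]) ! i, (\<gamma> @ [w]) ! Suc i} \<in> E"
    using edges by blast
  moreover have "\<forall>i. 0 < i \<and> Suc i < length (\<gamma> @ [w]) \<longrightarrow>
     cw_angle ((\<gamma> @ [w]) ! Suc i) ((\<gamma> @ [w]) ! i) ((\<gamma> @ [w]) ! (i - 1)) \<in> {pi - \<epsilon>..pi + \<epsilon>}"
    using angles by blast
  moreover have "\<forall>i j. Suc i < length (\<gamma> @ [w]) \<and> Suc j < length (\<gamma> @ [w]) \<and> i \<noteq> j \<longrightarrow>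
        {(\<gamma> @ [w]) ! i, (\<gamma> @ [w]) ! Suc i} \<noteq> {(\<gamma> @ [w]) ! j, (\<gamma> @ [w]) ! Suc j}"
    using ed by blast
  ultimately show ?thesis unfolding straight_path_def by blast
qed

lemma sp_cons:
  assumes sp: "sp \<gamma>" and e: "{\<gamma> ! 0, w} \<in> E"
    and o: "opp w (\<gamma> ! 0) (\<gamma> ! 1)"
  shows "sp (w # \<gamma>)"
proof -
  let ?n = "length \<gamma>"
  have n2: "?n \<ge> 2" using sp_len[OF sp] .
  have ne: "\<gamma> \<noteq> []" using n2 by auto
  have "last (rev \<gamma>) = \<gamma> ! 0" using ne by (simp add: last_rev hd_conv_nth)
  moreover have "rev \<gamma> ! (length (rev \<gamma>) - 2) = \<gamma> ! 1" using n2 by (simp add: rev_nth)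
  ultimately have "sp (rev \<gamma> @ [w])" using sp_snoc[OF sp_rev[OF sp]] e o by simp
  then have "sp (rev (rev \<gamma> @ [w]))" by (rule sp_rev)
  then show ?thesis by simp
qed

end


context setting begin

abbreviation mx where "mx \<gamma> \<equiv> maximal_straight \<epsilon> V E \<gamma>"

lemma Gamma_iff: "\<gamma> \<in> Gamma \<epsilon> V E \<longleftrightarrow> sp \<gamma>"
  unfolding Gamma_def by simp

lemma max_iff: "mx \<gamma> \<longleftrightarrow> sp \<gamma> \<and> (\<forall>w. \<not> sp (\<gamma> @ [w])) \<and> (\<forall>w. \<not> sp (w # \<gamma>))"
proof
  assume m: "mx \<gamma>"
  then have sp: "sp \<gamma>" unfolding maximal_straight_def Gamma_iff by blast
  have no: "\<not> (\<exists>\<gamma>' \<in> Gamma \<epsilon> V E. (sublist \<gamma> \<gamma>' \<or> sublist \<gamma> (rev \<gamma>')) \<and> \<not> (\<gamma>' = \<gamma> \<or> \<gamma>' = rev \<gamma>))"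
    using m unfolding maximal_straight_def by simp
  have no': "\<gamma>' = \<gamma> \<or> \<gamma>' = rev \<gamma>" if "sp \<gamma>'" "sublist \<gamma> \<gamma>'" for \<gamma>'
  proof (rule ccontr)
    assume c: "\<not> (\<gamma>' = \<gamma> \<or> \<gamma>' = rev \<gamma>)"
    have "\<gamma>' \<in> Gamma \<epsilon> V E" using that(1) Gamma_iff by simp
    moreover have "(sublist \<gamma> \<gamma>' \<or> sublist \<gamma> (rev \<gamma>')) \<and> \<not> (\<gamma>' = \<gamma> \<or> \<gamma>' = rev \<gamma>)" using that(2) c by simp
    ultimately have "\<exists>\<gamma>' \<in> Gamma \<epsilon> V E. (sublist \<gamma> \<gamma>' \<or> sublist \<gamma> (rev \<gamma>')) \<and> \<not> (\<gamma>' = \<gamma> \<or> \<gamma>' = rev \<gamma>)"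
      by (rule bexI[rotated])
    then show False using no by contradiction
  qed
  have a: "\<not> sp (\<gamma> @ [w])" for w
  proof
    assume s: "sp (\<gamma> @ [w])"
    have "sublist \<gamma> (\<gamma> @ [w])" using sublist_appendI[of \<gamma> "[]" "[w]"] by simp
    moreover have "\<gamma> @ [w] \<noteq> \<gamma>" "\<gamma> @ [w] \<noteq> rev \<gamma>" by (auto dest: arg_cong[of _ _ length])
    ultimately show False using no'[OF s] by simp
  qed
  have b: "\<not> sp (w # \<gamma>)" for w
  proof
    assume s: "sp (w # \<gamma>)"
    have "sublist \<gamma> (w # \<gamma>)" using sublist_appendI[of \<gamma> "[w]" "[]"] by simp
    moreover have "w # \<gamma> \<noteq> \<gamma>" "w # \<gamma> \<noteq> rev \<gamma>" by (auto dest: arg_cong[of _ _ length])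
    ultimately show False using no'[OF s] by simp
  qed
  show "sp \<gamma> \<and> (\<forall>w. \<not> sp (\<gamma> @ [w])) \<and> (\<forall>w. \<not> sp (w # \<gamma>))" using sp a b by blast
next
  assume h: "sp \<gamma> \<and> (\<forall>w. \<not> sp (\<gamma> @ [w])) \<and> (\<forall>w. \<not> sp (w # \<gamma>))"
  have key: False if g: "sp \<gamma>''" "sublist \<gamma> \<gamma>''" "\<gamma>'' \<noteq> \<gamma>" for \<gamma>''
  proof -
    obtain a b where ab: "\<gamma>'' = a @ \<gamma> @ b" using g(2) unfolding sublist_def by blast
    have l: "length \<gamma> \<ge> 2" using sp_len h by blast
    show False
    proof (cases b)
      case (Cons c b')
      then have "\<gamma>'' = a @ (\<gamma> @ [c]) @ b'" using ab by simp
      then have "sp (\<gamma> @ [c])" using sp_window[of a "\<gamma> @ [c]" b'] g(1) l by simp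
      then show False using h by blast
    next
      case Nil
      then have "a \<noteq> []" using ab g(3) by auto
      then have "a = butlast a @ [last a]" by simp
      then have "\<gamma>'' = butlast a @ (last a # \<gamma>) @ []" using ab Nil by (metis append.assoc append_Cons append_Nil append_Nil2)
      then have "sp (last a # \<gamma>)" using sp_window[of "butlast a" "last a # \<gamma>" "[]"] g(1) l by simp
      then show False using h by blast
    qed
  qed
  show "mx \<gamma>" unfolding maximal_straight_def
  proof (intro conjI notI)
    show "\<gamma> \<in> Gamma \<epsilon> V E" using h Gamma_iff by blast
    assume "\<exists>\<gamma>' \<in> Gamma \<epsilon> V E. (sublist \<gamma> \<gamma>' \<or> sublist \<gamma> (rev \<gamma>')) \<and> \<not> (\<gamma>' = \<gamma> \<or> \<gamma>' = rev \<gamma>)"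
    then obtain \<gamma>' where g0: "\<gamma>' \<in> Gamma \<epsilon> V E" "sublist \<gamma> \<gamma>' \<or> sublist \<gamma> (rev \<gamma>')" "\<gamma>' \<noteq> \<gamma>" "\<gamma>' \<noteq> rev \<gamma>"
      by blast
    have g': "sp \<gamma>'" "sublist \<gamma> \<gamma>' \<or> sublist \<gamma> (rev \<gamma>')" "\<gamma>' \<noteq> \<gamma>" "\<gamma>' \<noteq> rev \<gamma>"
      using g0 Gamma_iff by auto
    from g'(2) show False
    proof
      assume "sublist \<gamma> \<gamma>'" then show False using key[of \<gamma>'] g' by blast
    next
      assume s: "sublist \<gamma> (rev \<gamma>')"
      have "rev \<gamma>' \<noteq> \<gamma>" using g'(4) by auto
      then show False using key[of "rev \<gamma>'"] s sp_rev[OF g'(1)] by blast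
    qed
  qed
qed

lemma mx_sp: "mx \<gamma> \<Longrightarrow> sp \<gamma>" using max_iff by blast

lemma mx_rev: assumes "mx \<gamma>" shows "mx (rev \<gamma>)"
proof -
  have sp: "sp \<gamma>" and a: "\<And>w. \<not> sp (\<gamma> @ [w])" and b: "\<And>w. \<not> sp (w # \<gamma>)" using assms max_iff by blast+
  have "\<not> sp (rev \<gamma> @ [w])" for w
  proof
    assume "sp (rev \<gamma> @ [w])" then have "sp (rev (rev \<gamma> @ [w]))" by (rule sp_rev)
    then show False using b by simp
  qed
  moreover have "\<not> sp (w # rev \<gamma>)" for w
  proof
    assume "sp (w # rev \<gamma>)" then have "sp (rev (w # rev \<gamma>))" by (rule sp_rev)
    then show False using a by simp
  qed
  ultimately show ?thesis using max_iff sp_rev[OF sp] by blast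
qed

lemma sp_len_le: assumes "sp \<gamma>" shows "length \<gamma> \<le> card V"
proof -
  have "length \<gamma> = card (set \<gamma>)" using distinct_card[OF sp_distinct[OF assms]] by simp
  also have "\<dots> \<le> card V" using card_mono[OF finV sp_set[OF assms]] .
  finally show ?thesis .
qed

lemma exists_max: "sp \<gamma> \<Longrightarrow> \<exists>\<mu>. mx \<mu> \<and> sublist \<gamma> \<mu>"
proof (induction \<gamma> rule: measure_induct_rule[of "\<lambda>\<gamma>. card V - length \<gamma>"])
  case (less \<gamma>)
  show ?case
  proof (cases "mx \<gamma>")
    case True then show ?thesis by blast
  next
    case False
    then have "(\<exists>w. sp (\<gamma> @ [w])) \<or> (\<exists>w. sp (w # \<gamma>))" using max_iff less.prems by blast
    then obtain \<gamma>' where g: "sp \<gamma>'" "sublist \<gamma> \<gamma>'" "length \<gamma>' = Suc (length \<gamma>)"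
    proof (elim disjE exE)
      fix w assume "sp (\<gamma> @ [w])"
      moreover have "sublist \<gamma> (\<gamma> @ [w])" using sublist_appendI[of \<gamma> "[]" "[w]"] by simp
      ultimately show ?thesis using that by simp
    next
      fix w assume "sp (w # \<gamma>)"
      moreover have "sublist \<gamma> (w # \<gamma>)" using sublist_appendI[of \<gamma> "[w]" "[]"] by simp
      ultimately show ?thesis using that by simp
    qed
    have "length \<gamma>' \<le> card V" using sp_len_le[OF g(1)] .
    then have "card V - length \<gamma>' < card V - length \<gamma>" using g(3) by simp
    then obtain \<mu> where "mx \<mu>" "sublist \<gamma>' \<mu>" using less.IH g(1) by blast
    then show ?thesis using g(2) sublist_order.order_trans by blast
  qed
qed

lemma cont_unique:
  assumes v: "v \<in> V" and u: "u \<in> N v" and w1: "w1 \<in> N v" and w2: "w2 \<in> N v"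
    and o1: "opp w1 v u" and o2: "opp w2 v u"
  shows "w1 = w2"
proof (rule ccontr)
  assume ne: "w1 \<noteq> w2"
  have B: "u \<in> B v" "w1 \<in> B v" "w2 \<in> B v" using u w1 w2 unfolding B_def by auto
  have nv: "u \<noteq> v" "w1 \<noteq> v" "w2 \<noteq> v" using B_props[OF v] B by auto
  have "opp u v w1" "opp u v w2" using opp_sym nv o1 o2 by blast+
  then show False using opp_unique[OF v B ne] by blast
qed

lemma sp_N: assumes "sp \<mu>" "Suc i < length \<mu>"
  shows "\<mu> ! Suc i \<in> N (\<mu> ! i)" "\<mu> ! i \<in> N (\<mu> ! Suc i)" "\<mu> ! i \<in> V" "\<mu> ! Suc i \<in> V"
proof -
  have e: "{\<mu> ! i, \<mu> ! Suc i} \<in> E" using sp_edge[OF assms] .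
  show "\<mu> ! Suc i \<in> N (\<mu> ! i)" "\<mu> ! i \<in> N (\<mu> ! Suc i)" "\<mu> ! i \<in> V" "\<mu> ! Suc i \<in> V"
    using e edgeD[OF e] unfolding N_iff by (auto simp: insert_commute)
qed

lemma fwd:
  assumes s1: "sp \<mu>1" and s2: "sp \<mu>2" and a: "\<mu>1 ! i = \<mu>2 ! j" "\<mu>1 ! Suc i = \<mu>2 ! Suc j"
  shows "i + Suc k < length \<mu>1 \<Longrightarrow> j + Suc k < length \<mu>2 \<Longrightarrow>
     \<mu>1 ! (i + k) = \<mu>2 ! (j + k) \<and> \<mu>1 ! (i + Suc k) = \<mu>2 ! (j + Suc k)"
proof (induction k)
  case 0 then show ?case using a by simp
next
  case (Suc k)
  then have IH: "\<mu>1 ! (i + k) = \<mu>2 ! (j + k)" "\<mu>1 ! (i + Suc k) = \<mu>2 ! (j + Suc k)" by auto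
  let ?v = "\<mu>1 ! (i + Suc k)" and ?u = "\<mu>1 ! (i + k)"
  let ?w1 = "\<mu>1 ! Suc (i + Suc k)" and ?w2 = "\<mu>2 ! Suc (j + Suc k)"
  have l1: "Suc (i + Suc k) < length \<mu>1" and l2: "Suc (j + Suc k) < length \<mu>2" using Suc.prems by auto
  have vV: "?v \<in> V" using sp_N(3)[OF s1 l1] .
  have "?w1 \<in> N ?v" using sp_N(1)[OF s1 l1] .
  moreover have "?w2 \<in> N ?v" using sp_N(1)[OF s2 l2] IH by simp
  moreover have "?u \<in> N ?v" using sp_N(2)[OF s1, of "i + k"] l1 by simp
  moreover have "opp ?w1 ?v ?u" using sp_opp[OF s1 _ l1] by simp
  moreover have "opp ?w2 ?v ?u" using sp_opp[OF s2 _ l2] IH by simp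
  ultimately have "?w1 = ?w2" using cont_unique[OF vV] by blast
  then show ?case using IH by simp
qed

lemma fwd_len:
  assumes s1: "sp \<mu>1" and m2: "mx \<mu>2" and a: "\<mu>1 ! i = \<mu>2 ! j" "\<mu>1 ! Suc i = \<mu>2 ! Suc j"
    and l: "Suc i < length \<mu>1" "Suc j < length \<mu>2"
  shows "length \<mu>1 - i \<le> length \<mu>2 - j"
proof (rule ccontr)
  assume c: "\<not> ?thesis"
  have s2: "sp \<mu>2" using mx_sp[OF m2] .
  define k where "k = length \<mu>2 - j - 2"
  have k1: "j + Suc k = length \<mu>2 - 1" "i + Suc (Suc k) < length \<mu>1" "j + Suc k < length \<mu>2"
    "j + k = length \<mu>2 - 2"
    using c l unfolding k_def by auto
  have f: "\<mu>1 ! (i + k) = \<mu>2 ! (j + k)" "\<mu>1 ! (i + Suc k) = \<mu>2 ! (j + Suc k)"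
    using fwd[OF s1 s2 a, of k] k1 by auto
  let ?w = "\<mu>1 ! Suc (i + Suc k)"
  have ne: "\<mu>2 \<noteq> []" using l by auto
  have last: "last \<mu>2 = \<mu>1 ! (i + Suc k)" using f k1 ne by (simp add: last_conv_nth)
  have e: "{last \<mu>2, ?w} \<in> E" using sp_edge[OF s1, of "i + Suc k"] k1 last by simp
  have o: "opp ?w (last \<mu>2) (\<mu>2 ! (length \<mu>2 - 2))"
    using sp_opp[OF s1, of "i + Suc k"] k1 last f by simp
  have "sp (\<mu>2 @ [?w])" using sp_snoc[OF s2 e o] .
  then show False using m2 max_iff by blast
qed

lemma agree_all:
  assumes s1: "sp \<mu>1" and s2: "sp \<mu>2" and a: "\<mu>1 ! i = \<mu>2 ! i" "\<mu>1 ! Suc i = \<mu>2 ! Suc i"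
    and len: "length \<mu>1 = length \<mu>2" and p: "i \<le> p" "p < length \<mu>1"
  shows "\<mu>1 ! p = \<mu>2 ! p"
proof (cases "p = i")
  case True then show ?thesis using a by simp
next
  case False
  define k where "k = p - i - 1"
  have "i + Suc k = p" using False p unfolding k_def by auto
  then show ?thesis using fwd[OF s1 s2 a, of k] p len by auto
qed

lemma max_unique:
  assumes m1: "mx \<mu>1" and m2: "mx \<mu>2" and a: "\<mu>1 ! i = \<mu>2 ! j" "\<mu>1 ! Suc i = \<mu>2 ! Suc j"
    and l: "Suc i < length \<mu>1" "Suc j < length \<mu>2"
  shows "\<mu>1 = \<mu>2"
proof -
  have s1: "sp \<mu>1" and s2: "sp \<mu>2" using m1 m2 mx_sp by auto
  have L: "length \<mu>1 - i = length \<mu>2 - j"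
    using fwd_len[OF s1 m2 a l] fwd_len[OF s2 m1 a[symmetric] l(2,1)] by simp
  define i' where "i' = length \<mu>1 - 2 - i"
  define j' where "j' = length \<mu>2 - 2 - j"
  have r1: "rev \<mu>1 ! i' = \<mu>1 ! Suc i" "rev \<mu>1 ! Suc i' = \<mu>1 ! i" "Suc i' < length (rev \<mu>1)"
    using l unfolding i'_def by (auto simp: rev_nth Suc_diff_Suc)
  have r2: "rev \<mu>2 ! j' = \<mu>2 ! Suc j" "rev \<mu>2 ! Suc j' = \<mu>2 ! j" "Suc j' < length (rev \<mu>2)"
    using l unfolding j'_def by (auto simp: rev_nth Suc_diff_Suc)
  have ra: "rev \<mu>1 ! i' = rev \<mu>2 ! j'" "rev \<mu>1 ! Suc i' = rev \<mu>2 ! Suc j'" using r1 r2 a by auto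
  have L': "length (rev \<mu>1) - i' = length (rev \<mu>2) - j'"
    using fwd_len[OF sp_rev[OF s1] mx_rev[OF m2] ra r1(3) r2(3)]
      fwd_len[OF sp_rev[OF s2] mx_rev[OF m1] ra[symmetric] r2(3) r1(3)] by simp
  have ij: "i = j" using L' l unfolding i'_def j'_def by simp
  have len: "length \<mu>1 = length \<mu>2" using L l ij by simp
  have ii': "i' = j'" using ij len unfolding i'_def j'_def by simp
  show ?thesis
  proof (rule nth_equalityI[OF len])
    fix p assume p: "p < length \<mu>1"
    show "\<mu>1 ! p = \<mu>2 ! p"
    proof (cases "i \<le> p")
      case True then show ?thesis using agree_all[OF s1 s2 _ _ len True p] a ij by simp
    next
      case False
      define p' where "p' = length \<mu>1 - Suc p"
      have p': "i' \<le> p'" "p' < length (rev \<mu>1)" using False p unfolding p'_def i'_def by auto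
      have "rev \<mu>1 ! p' = rev \<mu>2 ! p'"
        using agree_all[OF sp_rev[OF s1] sp_rev[OF s2] _ _ _ p'] ra ii' len by simp
      moreover have "rev \<mu>1 ! p' = \<mu>1 ! p" "rev \<mu>2 ! p' = \<mu>2 ! p" using p len unfolding p'_def
        by (auto simp: rev_nth)
      ultimately show ?thesis by simp
    qed
  qed
qed

definition mp :: "complex \<Rightarrow> complex \<Rightarrow> complex list" where
  "mp x y = (THE \<mu>. mx \<mu> \<and> (\<exists>i. Suc i < length \<mu> \<and> \<mu> ! i = x \<and> \<mu> ! Suc i = y))"

lemma mp_ex: assumes "{x, y} \<in> E" shows "\<exists>\<mu>. mx \<mu> \<and> (\<exists>i. Suc i < length \<mu> \<and> \<mu> ! i = x \<and> \<mu> ! Suc i = y)"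
proof -
  obtain \<mu> where m: "mx \<mu>" "sublist [x, y] \<mu>" using exists_max[OF sp_two[OF assms]] by blast
  then obtain a b where "\<mu> = a @ [x, y] @ b" unfolding sublist_def by blast
  then have "Suc (length a) < length \<mu> \<and> \<mu> ! length a = x \<and> \<mu> ! Suc (length a) = y"
    by (simp add: nth_append)
  then show ?thesis using m by blast
qed

lemma mp_props: assumes "{x, y} \<in> E"
  shows "mx (mp x y)" "\<exists>i. Suc i < length (mp x y) \<and> mp x y ! i = x \<and> mp x y ! Suc i = y"
proof -
  have "mx (mp x y) \<and> (\<exists>i. Suc i < length (mp x y) \<and> mp x y ! i = x \<and> mp x y ! Suc i = y)"
    unfolding mp_def
  proof (rule theI')
    show "\<exists>!\<mu>. mx \<mu> \<and> (\<exists>i. Suc i < length \<mu> \<and> \<mu> ! i = x \<and> \<mu> ! Suc i = y)"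
    proof (rule ex_ex1I)
      show "\<exists>\<mu>. mx \<mu> \<and> (\<exists>i. Suc i < length \<mu> \<and> \<mu> ! i = x \<and> \<mu> ! Suc i = y)" using mp_ex[OF assms] .
    next
      fix \<mu>1 \<mu>2
      assume "mx \<mu>1 \<and> (\<exists>i. Suc i < length \<mu>1 \<and> \<mu>1 ! i = x \<and> \<mu>1 ! Suc i = y)"
        "mx \<mu>2 \<and> (\<exists>i. Suc i < length \<mu>2 \<and> \<mu>2 ! i = x \<and> \<mu>2 ! Suc i = y)"
      then show "\<mu>1 = \<mu>2" using max_unique by metis
    qed
  qed
  then show "mx (mp x y)" "\<exists>i. Suc i < length (mp x y) \<and> mp x y ! i = x \<and> mp x y ! Suc i = y" by auto
qed

lemma mp_eqI: assumes m: "mx \<mu>" and i: "Suc i < length \<mu>" and "\<mu> ! i = x" "\<mu> ! Suc i = y"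
  shows "mp x y = \<mu>"
proof -
  have e: "{x, y} \<in> E" using sp_edge[OF mx_sp[OF m] i] assms by simp
  obtain j where j: "Suc j < length (mp x y)" "mp x y ! j = x" "mp x y ! Suc j = y" using mp_props(2)[OF e] by blast
  show ?thesis using max_unique[OF mp_props(1)[OF e] m, of j i] j assms by simp
qed

lemma mp_rev: assumes e: "{x, y} \<in> E" shows "mp y x = rev (mp x y)"
proof -
  obtain i where i: "Suc i < length (mp x y)" "mp x y ! i = x" "mp x y ! Suc i = y" using mp_props(2)[OF e] by blast
  define i' where "i' = length (mp x y) - 2 - i"
  have "rev (mp x y) ! i' = y" "rev (mp x y) ! Suc i' = x" "Suc i' < length (rev (mp x y))"
    using i unfolding i'_def by (auto simp: rev_nth Suc_diff_Suc)
  then show ?thesis using mp_eqI[OF mx_rev[OF mp_props(1)[OF e]]] by blast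
qed

end


lemma three_elems:
  assumes "finite A" "card A \<ge> 3"
  obtains a b c where "a \<in> A" "b \<in> A" "c \<in> A" "a \<noteq> b" "b \<noteq> c" "a \<noteq> c"
proof -
  obtain a where a: "a \<in> A" using assms by fastforce
  have "card (A - {a}) \<ge> 2" using assms a by simp
  then have "A - {a} \<noteq> {}" by (metis card.empty not_numeral_le_zero)
  then obtain b where b: "b \<in> A - {a}" by blast
  have "card (A - {a} - {b}) \<ge> 1" using assms a b by (simp add: card_Diff_singleton)
  then have "A - {a} - {b} \<noteq> {}" by (metis card.empty not_one_le_zero)
  then obtain c where c: "c \<in> A - {a} - {b}" by blast
  show ?thesis using that a b c by blast
qed

lemma upath_eq: "upath a = upath b \<longleftrightarrow> b = a \<or> b = rev a"
  unfolding upath_def by (auto simp: doubleton_eq_iff)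

lemma upath_rev: "upath (rev a) = upath a"
  unfolding upath_def by auto

lemma spts_upath: "spts (upath \<mu>) = set \<mu>"
  unfolding spts_def upath_def by auto

lemma slen_upath: "slen (upath \<mu>) = length \<mu>"
proof -
  have "(SOME \<gamma>. \<gamma> \<in> upath \<mu>) \<in> upath \<mu>" by (rule someI[of _ \<mu>]) (simp add: upath_def)
  then show ?thesis unfolding slen_def upath_def by auto
qed

context setting begin

definition path :: "complex \<Rightarrow> complex \<Rightarrow> complex list set" where
  "path x y = upath (mp x y)"

lemma SG_iff: "s \<in> S_Gamma \<epsilon> V E \<longleftrightarrow> (\<exists>\<mu>. mx \<mu> \<and> s = upath \<mu>)"
  unfolding S_Gamma_def by auto

lemma finite_MS: "finite {\<mu>. mx \<mu>}"
proof (rule finite_subset[OF _ finite_lists_length_le[OF finV, of "card V"]])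
  show "{\<mu>. mx \<mu>} \<subseteq> {xs. set xs \<subseteq> V \<and> length xs \<le> card V}"
    using mx_sp sp_set sp_len_le by blast
qed

lemma finite_SG: "finite (S_Gamma \<epsilon> V E)"
  unfolding S_Gamma_def using finite_MS by simp

lemma path_in:
  assumes "y \<in> N x"
  shows "path x y \<in> S_Gamma \<epsilon> V E" "x \<in> spts (path x y)" "y \<in> spts (path x y)"
proof -
  have e: "{x, y} \<in> E" using assms N_iff by auto
  obtain i where i: "Suc i < length (mp x y)" "mp x y ! i = x" "mp x y ! Suc i = y" using mp_props(2)[OF e] by blast
  show "path x y \<in> S_Gamma \<epsilon> V E" unfolding path_def SG_iff using mp_props(1)[OF e] by blast
  show "x \<in> spts (path x y)" "y \<in> spts (path x y)" unfolding path_def spts_upath using i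
    by (metis Suc_lessD nth_mem)+
qed

lemma Px:
  assumes x: "x \<in> V"
  shows "{s \<in> S_Gamma \<epsilon> V E. x \<in> spts s} = path x ` N x"
proof
  show "path x ` N x \<subseteq> {s \<in> S_Gamma \<epsilon> V E. x \<in> spts s}" using path_in by auto
next
  show "{s \<in> S_Gamma \<epsilon> V E. x \<in> spts s} \<subseteq> path x ` N x"
  proof
    fix s assume "s \<in> {s \<in> S_Gamma \<epsilon> V E. x \<in> spts s}"
    then have s1: "s \<in> S_Gamma \<epsilon> V E" "x \<in> spts s" by auto
    then obtain \<mu> where m0: "mx \<mu>" "s = upath \<mu>" unfolding SG_iff by blast
    have m: "mx \<mu>" "s = upath \<mu>" "x \<in> set \<mu>" using m0 s1(2) spts_upath by auto
    have sp: "sp \<mu>" using mx_sp[OF m(1)] .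
    obtain p where p: "p < length \<mu>" "\<mu> ! p = x" using m(3) by (metis in_set_conv_nth)
    have l2: "length \<mu> \<ge> 2" using sp_len[OF sp] .
    show "s \<in> path x ` N x"
    proof (cases "Suc p < length \<mu>")
      case True
      have "\<mu> ! Suc p \<in> N x" using sp_N(1)[OF sp True] p by simp
      moreover have "mp x (\<mu> ! Suc p) = \<mu>" using mp_eqI[OF m(1) True] p by simp
      ultimately show ?thesis using m(2) unfolding path_def by force
    next
      case False
      then have pp: "Suc (p - 1) = p" "Suc (p - 1) < length \<mu>" using p l2 by auto
      have yN: "\<mu> ! (p - 1) \<in> N x" using sp_N(2)[OF sp pp(2)] pp p by simp
      have e: "{\<mu> ! (p - 1), x} \<in> E" using sp_edge[OF sp pp(2)] pp p by simp
      have "mp (\<mu> ! (p - 1)) x = \<mu>" using mp_eqI[OF m(1) pp(2)] pp p by simp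
      then have "mp x (\<mu> ! (p - 1)) = rev \<mu>" using mp_rev[OF e] by simp
      then have "path x (\<mu> ! (p - 1)) = s" unfolding path_def m(2) by (simp add: upath_rev)
      then show ?thesis using yN by force
    qed
  qed
qed

lemma path_eq:
  assumes x: "x \<in> V" and y: "y \<in> N x" and y': "y' \<in> N x"
  shows "path x y = path x y' \<longleftrightarrow> y = y' \<or> opp y x y'"
proof
  have e: "{x, y} \<in> E" "{x, y'} \<in> E" using y y' N_iff by auto
  assume eq: "path x y = path x y'"
  let ?\<mu> = "mp x y'"
  obtain i where i: "Suc i < length ?\<mu>" "?\<mu> ! i = x" "?\<mu> ! Suc i = y'" using mp_props(2)[OF e(2)] by blast
  have m: "mx ?\<mu>" using mp_props(1)[OF e(2)] .
  have sp: "sp ?\<mu>" using mx_sp[OF m] .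
  have d: "distinct ?\<mu>" using sp_distinct[OF sp] .
  have "?\<mu> = mp x y \<or> ?\<mu> = rev (mp x y)" using eq unfolding path_def upath_eq by auto
  then show "y = y' \<or> opp y x y'"
  proof
    assume h: "?\<mu> = mp x y"
    obtain j where j: "Suc j < length ?\<mu>" "?\<mu> ! j = x" "?\<mu> ! Suc j = y" using mp_props(2)[OF e(1)] h by auto
    have "i = j" using d i j by (metis Suc_lessD nth_eq_iff_index_eq)
    then show ?thesis using i j by simp
  next
    assume h: "?\<mu> = rev (mp x y)"
    have e': "{y, x} \<in> E" using e by (simp add: insert_commute)
    have h2: "?\<mu> = mp y x" using h mp_rev[OF e(1)] by simp
    obtain k where k: "Suc k < length ?\<mu>" "?\<mu> ! k = y" "?\<mu> ! Suc k = x" using mp_props(2)[OF e'] h2 by auto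
    have "i = Suc k" using d i k by (metis Suc_lessD nth_eq_iff_index_eq)
    then have "opp y' x y" using sp_opp[OF sp _ i(1)] i k by simp
    moreover have "y' \<noteq> x" "y \<noteq> x" using y y' edgeD e by auto
    ultimately show ?thesis using opp_sym by blast
  qed
next
  assume h: "y = y' \<or> opp y x y'"
  show "path x y = path x y'"
  proof (cases "y = y'")
    case True then show ?thesis by simp
  next
    case False
    then have o: "opp y x y'" using h by simp
    have e: "{x, y} \<in> E" "{x, y'} \<in> E" using y y' N_iff by auto
    have ne: "y \<noteq> x" "y' \<noteq> x" using edgeD e by auto
    have o': "opp y' x y" using opp_sym[OF ne o] .
    have sp3: "sp [y, x, y']"
    proof (rule sp_intro)
      show "length [y, x, y'] \<ge> 2" by simp
      show "set [y, x, y'] \<subseteq> V" using y y' x N_iff by auto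
      show "distinct [y, x, y']" using ne False by auto
      fix i
      show "Suc i < length [y, x, y'] \<Longrightarrow> {[y, x, y'] ! i, [y, x, y'] ! Suc i} \<in> E"
        using e by (cases i) (auto simp: insert_commute less_Suc_eq)
      show "0 < i \<Longrightarrow> Suc i < length [y, x, y'] \<Longrightarrow> opp ([y, x, y'] ! Suc i) ([y, x, y'] ! i) ([y, x, y'] ! (i - 1))"
        using o' by (cases i) auto
    qed
    obtain \<mu> where m: "mx \<mu>" "sublist [y, x, y'] \<mu>" using exists_max[OF sp3] by blast
    then obtain a b where ab: "\<mu> = a @ [y, x, y'] @ b" unfolding sublist_def by blast
    have "mp x y' = \<mu>" using mp_eqI[OF m(1), of "Suc (length a)"] ab by (simp add: nth_append)
    moreover have "mp y x = \<mu>" using mp_eqI[OF m(1), of "length a"] ab by (simp add: nth_append)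
    ultimately have "mp x y = rev \<mu>" using mp_rev[OF e(1)] by (metis rev_rev_ident)
    then show ?thesis unfolding path_def using \<open>mp x y' = \<mu>\<close> by (simp add: upath_rev)
  qed
qed

lemma img_le2:
  assumes x: "x \<in> V"
  shows "card (path x ` N x) \<le> 2"
proof (rule ccontr)
  assume "\<not> ?thesis"
  then have "card (path x ` N x) \<ge> 3" by simp
  then obtain s1 s2 s3 where s: "s1 \<in> path x ` N x" "s2 \<in> path x ` N x" "s3 \<in> path x ` N x"
    "s1 \<noteq> s2" "s2 \<noteq> s3" "s1 \<noteq> s3"
    using three_elems[of "path x ` N x"] finite_N by blast
  then obtain a b c where abc: "a \<in> N x" "b \<in> N x" "c \<in> N x" "s1 = path x a" "s2 = path x b" "s3 = path x c"
    by blast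
  have "\<not> opp a x b" "\<not> opp b x c" "\<not> opp a x c" "a \<noteq> b" "b \<noteq> c" "a \<noteq> c"
    using path_eq[OF x] abc s by metis+
  moreover have "a \<in> B x" "b \<in> B x" "c \<in> B x" using abc unfolding B_def by auto
  ultimately show False using three_opp[OF x] by blast
qed

lemma fib_le2:
  assumes x: "x \<in> V"
  shows "card {y \<in> N x. path x y = s} \<le> 2"
proof (rule ccontr)
  assume "\<not> ?thesis"
  then have "card {y \<in> N x. path x y = s} \<ge> 3" by simp
  then obtain a b c where abc: "a \<in> {y \<in> N x. path x y = s}" "b \<in> {y \<in> N x. path x y = s}"
    "c \<in> {y \<in> N x. path x y = s}" "a \<noteq> b" "b \<noteq> c" "a \<noteq> c"
    using three_elems[of "{y \<in> N x. path x y = s}"] finite_N by auto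
  have "opp a x b" "opp a x c" using path_eq[OF x] abc by auto
  moreover have "a \<in> B x" "b \<in> B x" "c \<in> B x" using abc unfolding B_def by auto
  ultimately show False using opp_unique[OF x] abc(5) by blast
qed

lemma deg_le:
  assumes x: "x \<in> V"
  shows "card (N x) \<le> 2 * card (path x ` N x)"
proof -
  have "card (N x) = (\<Sum>s\<in>path x ` N x. card {y \<in> N x. path x y = s})"
    using sum.group[of "N x" "path x ` N x" "path x" "\<lambda>_. 1::nat"] finite_N by simp
  also have "\<dots> \<le> (\<Sum>s\<in>path x ` N x. 2)" by (rule sum_mono) (rule fib_le2[OF x])
  finally show ?thesis by simp
qed

lemma V2pi_iff:
  assumes x: "x \<in> V" and N2: "N x = {a, b}" "a \<noteq> b"
  shows "x \<in> V2pi \<epsilon> V E \<longleftrightarrow> opp a x b"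
proof
  assume "x \<in> V2pi \<epsilon> V E"
  then obtain x1 x2 where h: "N x = {x1, x2}" "opp x1 x x2" unfolding V2pi_def opp_def by blast
  have "a \<in> N x" "b \<in> N x" using N2 by auto
  then have "{x, a} \<in> E" "{x, b} \<in> E" unfolding N_iff by auto
  then have ne: "a \<noteq> x" "b \<noteq> x" using edgeD by blast+
  have "(x1 = a \<and> x2 = b) \<or> (x1 = b \<and> x2 = a)" using h(1) N2 by (auto simp: doubleton_eq_iff)
  then show "opp a x b" using h(2) opp_sym[OF ne(2,1)] by auto
next
  assume "opp a x b"
  moreover have "x \<in> Vdeg V E 2" using x N2 unfolding Vdeg_def by simp
  ultimately show "x \<in> V2pi \<epsilon> V E" using N2 unfolding V2pi_def opp_def by blast
qed

lemma V2pi_deg: "x \<in> V2pi \<epsilon> V E \<Longrightarrow> card (N x) = 2"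
  unfolding V2pi_def Vdeg_def by auto

lemma count_Px:
  assumes x: "x \<in> V"
  shows "card (path x ` N x) + (if x \<in> Vdeg V E 0 then 2 else 0)
         + (if x \<in> Vdeg V E 1 \<union> V2pi \<epsilon> V E then 1 else 0) = 2"
proof -
  have fin: "finite (N x)" by (rule finite_N)
  consider "card (N x) = 0" | "card (N x) = 1" | "card (N x) = 2" | "card (N x) \<ge> 3" by linarith
  then show ?thesis
  proof cases
    case 1
    then have "N x = {}" using fin by simp
    moreover have "x \<in> Vdeg V E 0" using x 1 unfolding Vdeg_def by simp
    moreover have "x \<notin> Vdeg V E 1" "x \<notin> V2pi \<epsilon> V E" using 1 V2pi_deg unfolding Vdeg_def by auto
    ultimately show ?thesis by simp
  next
    case 2
    then obtain y where "N x = {y}" using card_1_singletonE by blast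
    moreover have "x \<notin> Vdeg V E 0" "x \<in> Vdeg V E 1" using x 2 unfolding Vdeg_def by auto
    ultimately show ?thesis by simp
  next
    case 3
    then obtain a b where ab: "N x = {a, b}" "a \<noteq> b" by (meson card_2_iff)
    have n0: "x \<notin> Vdeg V E 0" "x \<notin> Vdeg V E 1" using 3 unfolding Vdeg_def by auto
    have aN: "a \<in> N x" "b \<in> N x" using ab by auto
    show ?thesis
    proof (cases "opp a x b")
      case True
      then have "path x a = path x b" using path_eq[OF x aN] by simp
      then have "path x ` N x = {path x a}" using ab by auto
      moreover have "x \<in> V2pi \<epsilon> V E" using V2pi_iff[OF x ab] True by simp
      ultimately show ?thesis using n0 by simp
    next
      case False
      then have "path x a \<noteq> path x b" using path_eq[OF x aN] ab(2) by simp
      then have "card (path x ` N x) = 2" using ab by simp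
      moreover have "x \<notin> V2pi \<epsilon> V E" using V2pi_iff[OF x ab] False by simp
      ultimately show ?thesis using n0 by simp
    qed
  next
    case 4
    have "card (path x ` N x) = 2" using img_le2[OF x] deg_le[OF x] 4 by linarith
    moreover have "x \<notin> Vdeg V E 0" "x \<notin> Vdeg V E 1" "x \<notin> V2pi \<epsilon> V E" using 4 V2pi_deg unfolding Vdeg_def by auto
    ultimately show ?thesis by simp
  qed
qed

end


lemma spts_single: "spts (upath [x]) = {x}"
  by (simp add: spts_upath)

lemma slen_single: "slen (upath [x]) = 1"
  using slen_upath[of "[x]"] by simp

lemma size_filter_single:
  assumes "finite A"
  shows "size (filter_mset (\<lambda>t. x \<in> spts t) (image_mset (\<lambda>a. upath [a]) (mset_set A))) = (if x \<in> A then 1 else 0)"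
proof -
  have "{a \<in> A. x \<in> spts (upath [a])} = (if x \<in> A then {x} else {})" by (auto simp: spts_single)
  then show ?thesis using assms by (simp add: filter_mset_image_mset)
qed

lemma sum_mset_card_swap:
  assumes "finite V" "\<forall>s\<in>#M. spts s \<subseteq> V"
  shows "(\<Sum>s\<in>#M. card (spts s)) = (\<Sum>x\<in>V. size (filter_mset (\<lambda>t. x \<in> spts t) M))"
  using assms(2)
proof (induction M)
  case empty then show ?case by simp
next
  case (add a M)
  have c: "card (spts a) = (\<Sum>x\<in>V. if x \<in> spts a then 1 else 0)"
  proof -
    have "(\<Sum>x\<in>V. if x \<in> spts a then 1 else 0::nat) = card (V \<inter> spts a)" using assms(1) by (simp add: sum.If_cases)
    also have "V \<inter> spts a = spts a" using add.prems by auto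
    finally show ?thesis by simp
  qed
  have "(\<Sum>s\<in>#add_mset a M. card (spts s)) = card (spts a) + (\<Sum>s\<in>#M. card (spts s))" by simp
  also have "\<dots> = (\<Sum>x\<in>V. if x \<in> spts a then 1 else 0) + (\<Sum>x\<in>V. size (filter_mset (\<lambda>t. x \<in> spts t) M))"
    using c add by simp
  also have "\<dots> = (\<Sum>x\<in>V. size (filter_mset (\<lambda>t. x \<in> spts t) (add_mset a M)))"
    unfolding sum.distrib[symmetric] by (rule sum.cong) auto
  finally show ?case .
qed

context setting begin

lemma finite_Vdeg: "finite (Vdeg V E i)" using finV unfolding Vdeg_def by simp
lemma finite_V2pi: "finite (V2pi \<epsilon> V E)" using finite_Vdeg unfolding V2pi_def by simp

lemma strata_unfold: "strata \<epsilon> V E = mset_set (S_Gamma \<epsilon> V E)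
     + image_mset (\<lambda>x. upath [x]) (mset_set (Vdeg V E 0))
     + image_mset (\<lambda>x. upath [x]) (mset_set (Vdeg V E 0))
     + image_mset (\<lambda>x. upath [x]) (mset_set (Vdeg V E 1 \<union> V2pi \<epsilon> V E))"
  unfolding strata_def ..

lemma filter_count:
  assumes x: "x \<in> V"
  shows "size (filter_mset (\<lambda>t. x \<in> spts t) (strata \<epsilon> V E)) = 2"
proof -
  have f1: "size (filter_mset (\<lambda>t. x \<in> spts t) (mset_set (S_Gamma \<epsilon> V E))) = card (path x ` N x)"
    using finite_SG Px[OF x] by simp
  have fin: "finite (Vdeg V E 0)" "finite (Vdeg V E 1 \<union> V2pi \<epsilon> V E)" using finite_Vdeg finite_V2pi by auto
  have "size (filter_mset (\<lambda>t. x \<in> spts t) (strata \<epsilon> V E)) = card (path x ` N x) + (if x \<in> Vdeg V E 0 then 1 else 0)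
    + (if x \<in> Vdeg V E 0 then 1 else 0) + (if x \<in> Vdeg V E 1 \<union> V2pi \<epsilon> V E then 1 else 0)"
    unfolding strata_unfold filter_union_mset size_union f1 size_filter_single[OF fin(1)] size_filter_single[OF fin(2)] ..
  also have "\<dots> = 2" using count_Px[OF x] by (auto split: if_splits)
  finally show ?thesis .
qed

lemma part3:
  assumes x: "x \<in> V"
  shows "\<exists>s s'. filter_mset (\<lambda>t. x \<in> spts t) (strata \<epsilon> V E) = {#s, s'#} \<and> s' \<in># strata_perp \<epsilon> V E s"
proof -
  let ?F = "filter_mset (\<lambda>t. x \<in> spts t) (strata \<epsilon> V E)"
  have "size ?F = Suc 1" using filter_count[OF x] by simp
  then obtain s M where sM: "?F = add_mset s M" using size_eq_Suc_imp_eq_union by blast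
  then have "size M = Suc 0" using filter_count[OF x] by simp
  then obtain s' where "M = {#s'#}" using size_eq_Suc_imp_eq_union[of M 0] by auto
  then have F: "?F = {#s, s'#}" using sM by simp
  have "s \<in># ?F" "s' \<in># ?F" using F by auto
  then have xs: "x \<in> spts s" "x \<in> spts s'" by auto
  have "count ?F s' \<le> count (strata \<epsilon> V E) s'" by simp
  moreover have "count ?F s' = (if s = s' then 2 else 1)" using F by simp
  ultimately have "count (strata \<epsilon> V E) s' > count {#s#} s'" by (auto split: if_splits)
  then have "s' \<in># strata \<epsilon> V E - {#s#}" by (simp add: in_diff_count)
  moreover have "spts s' \<inter> spts s \<noteq> {}" using xs by blast
  ultimately have "s' \<in># strata_perp \<epsilon> V E s" unfolding strata_perp_def set_mset_filter by blast
  then show ?thesis using F by blast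
qed

lemma strata_elem:
  assumes "s \<in># strata \<epsilon> V E"
  shows "slen s = card (spts s) \<and> spts s \<subseteq> V"
proof -
  have "s \<in> S_Gamma \<epsilon> V E \<or> s \<in> (\<lambda>x. upath [x]) ` Vdeg V E 0 \<or> s \<in> (\<lambda>x. upath [x]) ` (Vdeg V E 1 \<union> V2pi \<epsilon> V E)"
    using assms finite_SG finite_Vdeg[of 0] finite_Vdeg[of 1] finite_V2pi unfolding strata_unfold
    by (simp del: image_Un)
  moreover have "Vdeg V E 0 \<subseteq> V" "Vdeg V E 1 \<union> V2pi \<epsilon> V E \<subseteq> V" unfolding V2pi_def Vdeg_def by auto
  ultimately have "s \<in> S_Gamma \<epsilon> V E \<or> (\<exists>x \<in> V. s = upath [x])" by blast
  then show ?thesis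
  proof
    assume "s \<in> S_Gamma \<epsilon> V E"
    then obtain \<mu> where m: "mx \<mu>" "s = upath \<mu>" unfolding SG_iff by blast
    have sp: "sp \<mu>" using mx_sp[OF m(1)] .
    show ?thesis using m sp_set[OF sp] distinct_card[OF sp_distinct[OF sp]] by (simp add: slen_upath spts_upath)
  next
    assume "\<exists>x \<in> V. s = upath [x]"
    then show ?thesis by (auto simp: slen_single spts_single)
  qed
qed

lemma part1: "(\<Sum>s \<in># strata \<epsilon> V E. slen s) = 2 * card V"
proof -
  have "(\<Sum>s \<in># strata \<epsilon> V E. slen s) = (\<Sum>s \<in># strata \<epsilon> V E. card (spts s))"
    using strata_elem by (intro arg_cong[of _ _ sum_mset] image_mset_cong) auto
  also have "\<dots> = (\<Sum>x\<in>V. size (filter_mset (\<lambda>t. x \<in> spts t) (strata \<epsilon> V E)))"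
    by (rule sum_mset_card_swap[OF finV]) (use strata_elem in blast)
  also have "\<dots> = (\<Sum>x\<in>V. 2)" using filter_count by simp
  finally show ?thesis by simp
qed

end


lemma rev_nth0: "xs \<noteq> [] \<Longrightarrow> rev xs ! 0 = last xs"
  by (simp add: rev_nth last_conv_nth)

lemma rev_nth1: "length xs \<ge> 2 \<Longrightarrow> rev xs ! 1 = xs ! (length xs - 2)"
  by (simp add: rev_nth numeral_2_eq_2)

context setting begin

definition DD where "DD = Sigma V N"

lemma card_DD: "card DD = (\<Sum>x\<in>V. card (N x))"
  unfolding DD_def using finV finite_N by simp

lemma finite_DD: "finite DD"
  unfolding DD_def using finV finite_N by simp

lemma fiber_DD:
  assumes m: "mx \<mu>"
  shows "{p \<in> DD. path (fst p) (snd p) = upath \<mu>} =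
     (\<lambda>i. (\<mu> ! i, \<mu> ! Suc i)) ` {..<length \<mu> - 1} \<union> (\<lambda>i. (\<mu> ! Suc i, \<mu> ! i)) ` {..<length \<mu> - 1}"
proof -
  have sp: "sp \<mu>" using mx_sp[OF m] .
  have l2: "length \<mu> \<ge> 2" using sp_len[OF sp] .
  show ?thesis
  proof (intro equalityI subsetI)
    fix p assume "p \<in> {p \<in> DD. path (fst p) (snd p) = upath \<mu>}"
    then obtain x y where p: "p = (x, y)" "x \<in> V" "y \<in> N x" "path x y = upath \<mu>" unfolding DD_def by auto
    have e: "{x, y} \<in> E" using p N_iff by auto
    obtain j where j: "Suc j < length (mp x y)" "mp x y ! j = x" "mp x y ! Suc j = y" using mp_props(2)[OF e] by blast
    have "\<mu> = mp x y \<or> \<mu> = rev (mp x y)" using p(4) unfolding path_def upath_eq by auto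
    then show "p \<in> (\<lambda>i. (\<mu> ! i, \<mu> ! Suc i)) ` {..<length \<mu> - 1} \<union> (\<lambda>i. (\<mu> ! Suc i, \<mu> ! i)) ` {..<length \<mu> - 1}"
    proof
      assume h: "\<mu> = mp x y"
      have "j \<in> {..<length \<mu> - 1}" "p = (\<mu> ! j, \<mu> ! Suc j)" using h j p(1) by auto
      then show ?thesis by (intro UnI1) blast
    next
      assume h: "\<mu> = rev (mp x y)"
      define i where "i = length \<mu> - 2 - j"
      have "\<mu> ! Suc i = x" "\<mu> ! i = y" "i < length \<mu> - 1" using h j unfolding i_def
        by (auto simp: rev_nth Suc_diff_Suc)
      then show ?thesis using p(1) by (intro UnI2) blast
    qed
  next
    fix p assume "p \<in> (\<lambda>i. (\<mu> ! i, \<mu> ! Suc i)) ` {..<length \<mu> - 1} \<union> (\<lambda>i. (\<mu> ! Suc i, \<mu> ! i)) ` {..<length \<mu> - 1}"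
    then obtain i where i: "Suc i < length \<mu>" "p = (\<mu> ! i, \<mu> ! Suc i) \<or> p = (\<mu> ! Suc i, \<mu> ! i)"
    proof (elim UnE imageE)
      fix i assume "p = (\<mu> ! i, \<mu> ! Suc i)" "i \<in> {..<length \<mu> - 1}"
      then show ?thesis using that[of i] by auto
    next
      fix i assume "p = (\<mu> ! Suc i, \<mu> ! i)" "i \<in> {..<length \<mu> - 1}"
      then show ?thesis using that[of i] by auto
    qed
    have N1: "\<mu> ! Suc i \<in> N (\<mu> ! i)" "\<mu> ! i \<in> N (\<mu> ! Suc i)" "\<mu> ! i \<in> V" "\<mu> ! Suc i \<in> V" using sp_N[OF sp i(1)] by auto
    have mp1: "mp (\<mu> ! i) (\<mu> ! Suc i) = \<mu>" using mp_eqI[OF m i(1)] by simp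
    have e: "{\<mu> ! i, \<mu> ! Suc i} \<in> E" using sp_edge[OF sp i(1)] .
    have mp2: "mp (\<mu> ! Suc i) (\<mu> ! i) = rev \<mu>" using mp_rev[OF e] mp1 by simp
    show "p \<in> {p \<in> DD. path (fst p) (snd p) = upath \<mu>}"
      using i(2) N1 mp1 mp2 unfolding DD_def path_def by (auto simp: upath_rev)
  qed
qed

lemma card_fiber_DD:
  assumes m: "mx \<mu>"
  shows "card {p \<in> DD. path (fst p) (snd p) = upath \<mu>} = 2 * (length \<mu> - 1)"
proof -
  have sp: "sp \<mu>" using mx_sp[OF m] .
  have d: "distinct \<mu>" using sp_distinct[OF sp] .
  have inj: "\<mu> ! i = \<mu> ! j \<Longrightarrow> i < length \<mu> \<Longrightarrow> j < length \<mu> \<Longrightarrow> i = j" for i j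
    using d by (simp add: nth_eq_iff_index_eq)
  have i1: "inj_on (\<lambda>i. (\<mu> ! i, \<mu> ! Suc i)) {..<length \<mu> - 1}"
    by (rule inj_onI) (use inj in auto)
  have i2: "inj_on (\<lambda>i. (\<mu> ! Suc i, \<mu> ! i)) {..<length \<mu> - 1}"
    by (rule inj_onI) (use inj in auto)
  have disj: "(\<lambda>i. (\<mu> ! i, \<mu> ! Suc i)) ` {..<length \<mu> - 1} \<inter> (\<lambda>i. (\<mu> ! Suc i, \<mu> ! i)) ` {..<length \<mu> - 1} = {}"
  proof (rule ccontr)
    assume "\<not> ?thesis"
    then obtain i j where "i < length \<mu> - 1" "j < length \<mu> - 1" "\<mu> ! i = \<mu> ! Suc j" "\<mu> ! Suc i = \<mu> ! j" by auto
    then have "i = Suc j" "Suc i = j" using inj by auto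
    then show False by simp
  qed
  show ?thesis unfolding fiber_DD[OF m]
    using card_Un_disjoint[OF _ _ disj] card_image[OF i1] card_image[OF i2] by simp
qed

lemma deg_sum: "(\<Sum>x\<in>V. card (N x)) = (\<Sum>s\<in>S_Gamma \<epsilon> V E. 2 * (slen s - 1))"
proof -
  have sub: "(\<lambda>p. path (fst p) (snd p)) ` DD \<subseteq> S_Gamma \<epsilon> V E"
    unfolding DD_def using path_in by auto
  have "card DD = (\<Sum>s\<in>S_Gamma \<epsilon> V E. card {p \<in> DD. path (fst p) (snd p) = s})"
    using sum.group[of DD "S_Gamma \<epsilon> V E" "\<lambda>p. path (fst p) (snd p)" "\<lambda>_. 1::nat"] finite_DD finite_SG sub
    by simp
  also have "\<dots> = (\<Sum>s\<in>S_Gamma \<epsilon> V E. 2 * (slen s - 1))"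
  proof (rule sum.cong[OF refl])
    fix s assume "s \<in> S_Gamma \<epsilon> V E"
    then obtain \<mu> where m: "mx \<mu>" "s = upath \<mu>" unfolding SG_iff by blast
    show "card {p \<in> DD. path (fst p) (snd p) = s} = 2 * (slen s - 1)"
      using card_fiber_DD[OF m(1)] m(2) slen_upath by simp
  qed
  finally show ?thesis using card_DD by simp
qed

definition IEnd where "IEnd x y \<longleftrightarrow> (\<exists>z \<in> sub x. opp z x y)"

lemma ip_iff:
  assumes sp: "sp \<gamma>"
  shows "interacting_path \<epsilon> r0 \<gamma> \<longleftrightarrow> IEnd (\<gamma> ! 0) (\<gamma> ! 1) \<or> IEnd (last \<gamma>) (\<gamma> ! (length \<gamma> - 2))"
proof -
  have l2: "length \<gamma> \<ge> 2" using sp_len[OF sp] .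
  have ne: "\<gamma> \<noteq> []" using l2 by auto
  have lastV: "last \<gamma> \<in> V" using sp_nth_V[OF sp, of "length \<gamma> - 1"] l2 ne by (simp add: last_conv_nth)
  have pV: "\<gamma> ! (length \<gamma> - 2) \<in> V" using sp_nth_V[OF sp, of "length \<gamma> - 2"] l2 by simp
  have "(\<exists>z \<in> sub (last \<gamma>). cw_angle (\<gamma> ! (length \<gamma> - 2)) (last \<gamma>) z \<in> {pi - \<epsilon> .. pi + \<epsilon>})
      \<longleftrightarrow> IEnd (last \<gamma>) (\<gamma> ! (length \<gamma> - 2))"
  proof
    assume "\<exists>z \<in> sub (last \<gamma>). cw_angle (\<gamma> ! (length \<gamma> - 2)) (last \<gamma>) z \<in> {pi - \<epsilon> .. pi + \<epsilon>}"
    then obtain z where z: "z \<in> sub (last \<gamma>)" "opp (\<gamma> ! (length \<gamma> - 2)) (last \<gamma>) z" unfolding opp_def by blast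
    have "z \<noteq> last \<gamma>" "\<gamma> ! (length \<gamma> - 2) \<noteq> last \<gamma>"
      using z(1) V_not_sub lastV unfolding nbr_sub_def
      apply auto[1]
      using sp_distinct[OF sp] l2 ne by (auto simp: last_conv_nth nth_eq_iff_index_eq)
    then show "IEnd (last \<gamma>) (\<gamma> ! (length \<gamma> - 2))" unfolding IEnd_def using z opp_sym by blast
  next
    assume "IEnd (last \<gamma>) (\<gamma> ! (length \<gamma> - 2))"
    then obtain z where z: "z \<in> sub (last \<gamma>)" "opp z (last \<gamma>) (\<gamma> ! (length \<gamma> - 2))" unfolding IEnd_def by blast
    have "z \<noteq> last \<gamma>" "\<gamma> ! (length \<gamma> - 2) \<noteq> last \<gamma>"
      using z(1) V_not_sub lastV unfolding nbr_sub_def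
      apply auto[1]
      using sp_distinct[OF sp] l2 ne by (auto simp: last_conv_nth nth_eq_iff_index_eq)
    then show "\<exists>z \<in> sub (last \<gamma>). cw_angle (\<gamma> ! (length \<gamma> - 2)) (last \<gamma>) z \<in> {pi - \<epsilon> .. pi + \<epsilon>}"
      using z opp_sym unfolding opp_def by blast
  qed
  then show ?thesis unfolding interacting_path_def IEnd_def opp_def by blast
qed

lemma not_both:
  assumes sp: "sp \<mu>" and h: "IEnd (last \<mu>) (\<mu> ! (length \<mu> - 2))" and z: "z \<in> sub (\<mu> ! 0)"
  shows False
proof -
  have l2: "length \<mu> \<ge> 2" using sp_len[OF sp] .
  have ne: "\<mu> \<noteq> []" using l2 by auto
  obtain z' where z': "z' \<in> sub (last \<mu>)" "opp z' (last \<mu>) (\<mu> ! (length \<mu> - 2))" using h unfolding IEnd_def by blast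
  have "last \<mu> = \<mu> ! (length \<mu> - 1)" using ne by (simp add: last_conv_nth)
  then show False using geo_ends[OF sp refl z, of z'] z' by simp
qed

lemma interacting_iff:
  assumes m: "mx \<mu>"
  shows "interacting \<epsilon> r0 (upath \<mu>) \<longleftrightarrow> IEnd (\<mu> ! 0) (\<mu> ! 1) \<or> IEnd (last \<mu>) (\<mu> ! (length \<mu> - 2))"
proof -
  have sp: "sp \<mu>" using mx_sp[OF m] .
  have l2: "length \<mu> \<ge> 2" using sp_len[OF sp] .
  have ne: "\<mu> \<noteq> []" using l2 by auto
  have r: "rev \<mu> ! 0 = last \<mu>" "rev \<mu> ! 1 = \<mu> ! (length \<mu> - 2)" "last (rev \<mu>) = \<mu> ! 0"
     "rev \<mu> ! (length (rev \<mu>) - 2) = \<mu> ! 1"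
    using l2 ne by (auto simp: rev_nth last_conv_nth hd_conv_nth last_rev numeral_2_eq_2)
  show ?thesis unfolding interacting_def upath_def using ip_iff[OF sp] ip_iff[OF sp_rev[OF sp]] r by auto
qed

definition IE where "IE = Sigma V (\<lambda>x. {y \<in> N x. IEnd x y})"

lemma IE_start:
  assumes "(x, y) \<in> IE"
  shows "mp x y ! 0 = x" "mp x y ! 1 = y"
proof -
  have x: "x \<in> V" and y: "y \<in> N x" and ie: "IEnd x y" using assms unfolding IE_def by auto
  have e: "{x, y} \<in> E" using y N_iff by auto
  obtain i where i: "Suc i < length (mp x y)" "mp x y ! i = x" "mp x y ! Suc i = y" using mp_props(2)[OF e] by blast
  have sp: "sp (mp x y)" using mx_sp[OF mp_props(1)[OF e]] .
  have "i = 0"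
  proof (rule ccontr)
    assume "i \<noteq> 0"
    then have i0: "0 < i" by simp
    let ?w = "mp x y ! (i - 1)"
    have o: "opp y x ?w" using sp_opp[OF sp i0 i(1)] i by simp
    have "Suc (i - 1) < length (mp x y)" using i i0 by simp
    then have wN: "?w \<in> N x" using sp_N(2)[OF sp, of "i - 1"] i i0 by simp
    obtain z where z: "z \<in> sub x" "opp z x y" using ie unfolding IEnd_def by blast
    have B: "y \<in> B x" "?w \<in> B x" "z \<in> B x" using y wN z unfolding B_def by auto
    have "?w \<noteq> z" using wN z V_not_sub unfolding nbr_sub_def N_iff by auto
    moreover have "z \<noteq> x" "y \<noteq> x" using B_props[OF x] B by auto
    then have "opp y x z" using opp_sym z(2) by blast
    ultimately show False using opp_unique[OF x B] o by blast
  qed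
  then show "mp x y ! 0 = x" "mp x y ! 1 = y" using i by auto
qed

definition ISG where "ISG = {s \<in> S_Gamma \<epsilon> V E. interacting \<epsilon> r0 s}"

lemma IE_bij: "bij_betw (\<lambda>p. path (fst p) (snd p)) IE ISG"
proof (rule bij_betwI')
  fix p q assume p: "p \<in> IE" and q: "q \<in> IE"
  obtain x y where pp: "p = (x, y)" by force
  obtain x' y' where qq: "q = (x', y')" by force
  have ie: "(x, y) \<in> IE" "(x', y') \<in> IE" using p q pp qq by auto
  have e: "{x, y} \<in> E" "{x', y'} \<in> E" using ie unfolding IE_def N_iff by auto
  let ?\<mu> = "mp x y"
  have m: "mx ?\<mu>" using mp_props(1)[OF e(1)] .
  have sp: "sp ?\<mu>" using mx_sp[OF m] .
  have l2: "length ?\<mu> \<ge> 2" using sp_len[OF sp] .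
  show "(path (fst p) (snd p) = path (fst q) (snd q)) = (p = q)"
  proof
    assume "path (fst p) (snd p) = path (fst q) (snd q)"
    then have "mp x' y' = ?\<mu> \<or> mp x' y' = rev ?\<mu>" using pp qq unfolding path_def upath_eq by auto
    then show "p = q"
    proof
      assume "mp x' y' = ?\<mu>"
      then show ?thesis using IE_start[OF ie(1)] IE_start[OF ie(2)] pp qq by metis
    next
      assume h: "mp x' y' = rev ?\<mu>"
      have ne: "?\<mu> \<noteq> []" using l2 by auto
      have "x' = last ?\<mu>" "y' = ?\<mu> ! (length ?\<mu> - 2)" using IE_start[OF ie(2)] h rev_nth0[OF ne] rev_nth1[OF l2]
        by auto
      then have "IEnd (last ?\<mu>) (?\<mu> ! (length ?\<mu> - 2))" using ie(2) unfolding IE_def by auto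
      moreover obtain z where "z \<in> sub x" using ie(1) unfolding IE_def IEnd_def by auto
      ultimately show ?thesis using not_both[OF sp] IE_start[OF ie(1)] by metis
    qed
  qed simp
next
  fix p assume p: "p \<in> IE"
  obtain x y where pp: "p = (x, y)" by force
  have ie: "(x, y) \<in> IE" using p pp by simp
  have e: "{x, y} \<in> E" using ie unfolding IE_def N_iff by auto
  have "IEnd (mp x y ! 0) (mp x y ! 1)" using IE_start[OF ie] ie unfolding IE_def by auto
  then have "interacting \<epsilon> r0 (upath (mp x y))" using interacting_iff[OF mp_props(1)[OF e]] by blast
  moreover have "path x y \<in> S_Gamma \<epsilon> V E" using path_in ie unfolding IE_def by auto
  ultimately show "path (fst p) (snd p) \<in> ISG" unfolding ISG_def path_def pp by simp
next
  fix s assume "s \<in> ISG"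
  then obtain \<mu> where m: "mx \<mu>" "s = upath \<mu>" and int: "interacting \<epsilon> r0 s" unfolding ISG_def SG_iff by blast
  have sp: "sp \<mu>" using mx_sp[OF m(1)] .
  have l2: "length \<mu> \<ge> 2" using sp_len[OF sp] .
  have ne: "\<mu> \<noteq> []" using l2 by auto
  have "IEnd (\<mu> ! 0) (\<mu> ! 1) \<or> IEnd (last \<mu>) (\<mu> ! (length \<mu> - 2))" using int interacting_iff[OF m(1)] m(2) by simp
  then show "\<exists>p \<in> IE. s = path (fst p) (snd p)"
  proof
    assume h: "IEnd (\<mu> ! 0) (\<mu> ! 1)"
    have l: "Suc 0 < length \<mu>" using l2 by simp
    have "(\<mu> ! 0, \<mu> ! 1) \<in> IE" using h sp_N[OF sp l] unfolding IE_def by auto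
    moreover have "mp (\<mu> ! 0) (\<mu> ! 1) = \<mu>" using mp_eqI[OF m(1) l] by simp
    ultimately show ?thesis using m(2) unfolding path_def by force
  next
    assume h: "IEnd (last \<mu>) (\<mu> ! (length \<mu> - 2))"
    have l: "Suc 0 < length (rev \<mu>)" using l2 by simp
    have r: "rev \<mu> ! 0 = last \<mu>" "rev \<mu> ! Suc 0 = \<mu> ! (length \<mu> - 2)"
      using l2 ne by (auto simp: rev_nth last_conv_nth numeral_2_eq_2)
    have "(last \<mu>, \<mu> ! (length \<mu> - 2)) \<in> IE" using h sp_N[OF sp_rev[OF sp] l] r unfolding IE_def by auto
    moreover have "mp (last \<mu>) (\<mu> ! (length \<mu> - 2)) = rev \<mu>" using mp_eqI[OF mx_rev[OF m(1)] l] r by simp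
    ultimately show ?thesis using m(2) unfolding path_def by (force simp: upath_rev)
  qed
qed

lemma card_ISG: "card ISG = (\<Sum>x\<in>V. card {y \<in> N x. IEnd x y})"
proof -
  have "card ISG = card IE" using bij_betw_same_card[OF IE_bij] by simp
  also have "\<dots> = (\<Sum>x\<in>V. card {y \<in> N x. IEnd x y})" unfolding IE_def using finV finite_N by simp
  finally show ?thesis .
qed

end


context setting begin

definition A1 where "A1 = {x \<in> Vdeg V E 0 \<union> V2pi \<epsilon> V E. sub x \<noteq> {}}"
definition A2 where "A2 = {x \<in> Vdeg V E 1. sub x \<noteq> {} \<and>
            \<not> (\<exists>s \<in> S_Gamma \<epsilon> V E. interacting \<epsilon> r0 s \<and> x \<in> spts s)}"

lemma ISG_onto: assumes "s \<in> ISG" shows "\<exists>p \<in> IE. s = path (fst p) (snd p)"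
proof -
  have "s \<in> (\<lambda>p. path (fst p) (snd p)) ` IE" using bij_betw_imp_surj_on[OF IE_bij] assms by simp
  then show ?thesis by blast
qed

lemma ISG_into: "p \<in> IE \<Longrightarrow> path (fst p) (snd p) \<in> ISG"
  using bij_betw_apply[OF IE_bij] by blast

lemma deg1_not_int:
  assumes x: "x \<in> V" and N1: "N x = {y}" and z: "z \<in> sub x" and no: "\<not> opp z x y"
  shows "\<not> (\<exists>s \<in> S_Gamma \<epsilon> V E. interacting \<epsilon> r0 s \<and> x \<in> spts s)"
proof
  assume "\<exists>s \<in> S_Gamma \<epsilon> V E. interacting \<epsilon> r0 s \<and> x \<in> spts s"
  then obtain s where s: "s \<in> ISG" "x \<in> spts s" unfolding ISG_def by blast
  obtain p where p: "p \<in> IE" "s = path (fst p) (snd p)" using ISG_onto[OF s(1)] by blast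
  obtain x' y' where pp: "p = (x', y')" by force
  have ie: "(x', y') \<in> IE" using p pp by simp
  have e: "{x', y'} \<in> E" using ie unfolding IE_def N_iff by auto
  let ?\<mu> = "mp x' y'"
  have m: "mx ?\<mu>" using mp_props(1)[OF e] .
  have sp: "sp ?\<mu>" using mx_sp[OF m] .
  have l2: "length ?\<mu> \<ge> 2" using sp_len[OF sp] .
  have ne: "?\<mu> \<noteq> []" using l2 by auto
  have st: "?\<mu> ! 0 = x'" "?\<mu> ! 1 = y'" using IE_start[OF ie] by auto
  have "x \<in> set ?\<mu>" using s(2) p(2) pp by (simp add: path_def spts_upath)
  then obtain q where q: "q < length ?\<mu>" "?\<mu> ! q = x" by (metis in_set_conv_nth)
  consider "q = 0" | "q = length ?\<mu> - 1" | "0 < q \<and> q < length ?\<mu> - 1" using q by linarith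
  then show False
  proof cases
    case 1
    then have "x' = x" using st q by simp
    moreover have "y' \<in> N x'" using ie unfolding IE_def by auto
    ultimately have "y' = y" using N1 by auto
    moreover obtain z' where "z' \<in> sub x'" "opp z' x' y'" using ie unfolding IE_def IEnd_def by auto
    ultimately show False using sub_unique[OF x z] z no \<open>x' = x\<close> by auto
  next
    case 2
    have lastx: "last ?\<mu> = x" using 2 q ne by (simp add: last_conv_nth)
    have "IEnd (last (rev ?\<mu>)) (rev ?\<mu> ! (length (rev ?\<mu>) - 2))"
      using ie st l2 ne unfolding IE_def by (auto simp: last_rev hd_conv_nth rev_nth numeral_2_eq_2)
    moreover have "z \<in> sub (rev ?\<mu> ! 0)" using z lastx rev_nth0[OF ne] by simp
    ultimately show False using not_both[OF sp_rev[OF sp]] by blast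
  next
    case 3
    have q1: "Suc (q - 1) < length ?\<mu>" "Suc q < length ?\<mu>" using 3 by auto
    have "?\<mu> ! (q - 1) \<in> N x" using sp_N(2)[OF sp q1(1)] 3 q by simp
    moreover have "?\<mu> ! Suc q \<in> N x" using sp_N(1)[OF sp q1(2)] q by simp
    moreover have "?\<mu> ! (q - 1) \<noteq> ?\<mu> ! Suc q" using sp_distinct[OF sp] q1 3
      by (auto simp: nth_eq_iff_index_eq)
    ultimately show False using N1 by auto
  qed
qed

lemma per_vertex:
  assumes x: "x \<in> V"
  shows "card (sub x) = card {y \<in> N x. IEnd x y} + (if x \<in> A1 then 1 else 0) + (if x \<in> A2 then 1 else 0)"
proof (cases "sub x = {}")
  case True
  then have e: "{y \<in> N x. IEnd x y} = {}" unfolding IEnd_def by auto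
  have c: "card {y \<in> N x. IEnd x y} = 0" unfolding e by simp
  show ?thesis using c True by (simp add: A1_def A2_def)
next
  case False
  then obtain z where z: "z \<in> sub x" by blast
  have subz: "sub x = {z}" using sub_unique[OF x] z by blast
  have Y: "{y \<in> N x. IEnd x y} = {y \<in> N x. opp z x y}" unfolding IEnd_def subz by simp
  have zB: "z \<in> B x" using z unfolding B_def by auto
  have zV: "\<And>w. w \<in> N x \<Longrightarrow> w \<noteq> z" using z V_not_sub unfolding nbr_sub_def N_iff by auto
  show ?thesis
  proof (cases "\<exists>y \<in> N x. opp z x y")
    case True
    then obtain y where y: "y \<in> N x" "opp z x y" by blast
    have "{y \<in> N x. opp z x y} = {y}"
    proof (intro equalityI subsetI)
      fix y' assume y': "y' \<in> {y \<in> N x. opp z x y}"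
      show "y' \<in> {y}"
      proof (rule ccontr)
        assume "y' \<notin> {y}"
        then show False using opp_unique[OF x zB, of y y'] y y' unfolding B_def by auto
      qed
    qed (use y in auto)
    then have cY: "card {y \<in> N x. IEnd x y} = 1" using Y by simp
    have yne: "N x \<noteq> {}" using y by auto
    have n0: "x \<notin> Vdeg V E 0" using yne finite_N unfolding Vdeg_def by auto
    have n2: "x \<notin> V2pi \<epsilon> V E"
    proof
      assume v: "x \<in> V2pi \<epsilon> V E"
      then obtain a b where ab: "N x = {a, b}" "a \<noteq> b" using V2pi_deg by (meson card_2_iff)
      have oab: "opp a x b" using V2pi_iff[OF x ab] v by simp
      have aN: "a \<in> N x" "b \<in> N x" using ab by auto
      have ne: "a \<noteq> x" "b \<noteq> x" "z \<noteq> x" "y \<noteq> x" using B_props[OF x] aN zB y unfolding B_def by auto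
      obtain w where w: "w \<in> N x" "opp y x w" "w \<noteq> z"
      proof (cases "y = a")
        case True then show ?thesis using that[of b] oab aN zV by auto
      next
        case False then have "y = b" using y ab by auto
        then show ?thesis using that[of a] opp_sym[OF ne(1,2) oab] aN zV by auto
      qed
      have "opp y x z" using opp_sym[OF ne(3,4) y(2)] .
      moreover have "y \<in> B x" "w \<in> B x" using y w unfolding B_def by auto
      ultimately show False using opp_unique[OF x _ _ zB w(3)] w(2) by blast
    qed
    have n3: "x \<notin> A2"
    proof -
      have "(x, y) \<in> IE" using x y z unfolding IE_def IEnd_def by auto
      then have "path x y \<in> ISG" using ISG_into by force
      moreover have "x \<in> spts (path x y)" using path_in(2)[OF y(1)] .
      ultimately show ?thesis unfolding A2_def ISG_def by blast
    qed
    show ?thesis using cY n0 n2 n3 subz unfolding A1_def by simp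
  next
    case False
    then have Y0: "{y \<in> N x. IEnd x y} = {}" using Y by auto
    have cY0: "card {y \<in> N x. IEnd x y} = 0" unfolding Y0 by simp
    have pair: "opp a x b" if "a \<in> N x" "b \<in> N x" "a \<noteq> b" for a b
    proof -
      have "a \<in> B x" "b \<in> B x" using that unfolding B_def by auto
      then have "opp z x a \<or> opp a x b \<or> opp z x b" using three_opp[OF x zB] that zV by blast
      then show ?thesis using False that by blast
    qed
    have le2: "card (N x) \<le> 2"
    proof (rule ccontr)
      assume "\<not> ?thesis"
      then have "card (N x) \<ge> 3" by simp
      then obtain a b c where abc: "a \<in> N x" "b \<in> N x" "c \<in> N x" "a \<noteq> b" "b \<noteq> c" "a \<noteq> c"
        using three_elems[OF finite_N] by blast
      have "opp a x b" "opp a x c" using pair abc by auto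
      moreover have "a \<in> B x" "b \<in> B x" "c \<in> B x" using abc unfolding B_def by auto
      ultimately show False using opp_unique[OF x] abc(5) by blast
    qed
    consider "card (N x) = 0" | "card (N x) = 1" | "card (N x) = 2" using le2 by linarith
    then show ?thesis
    proof cases
      case 1
      have v0: "x \<in> Vdeg V E 0" "x \<notin> Vdeg V E 1" using x 1 unfolding Vdeg_def by auto
      have "x \<in> A1" unfolding A1_def using v0 z by blast
      moreover have "x \<notin> A2" unfolding A2_def using v0 by blast
      ultimately show ?thesis using cY0 subz by simp
    next
      case 2
      then obtain y where N1: "N x = {y}" using card_1_singletonE by blast
      have v1: "x \<notin> Vdeg V E 0" "x \<in> Vdeg V E 1" "x \<notin> V2pi \<epsilon> V E" using x 2 V2pi_deg unfolding Vdeg_def by auto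
      have "x \<notin> A1" unfolding A1_def using v1 by blast
      moreover have "\<not> opp z x y" using False N1 by auto
      then have "\<not> (\<exists>s \<in> S_Gamma \<epsilon> V E. interacting \<epsilon> r0 s \<and> x \<in> spts s)" using deg1_not_int[OF x N1 z] by blast
      then have "x \<in> A2" unfolding A2_def using v1 z by blast
      ultimately show ?thesis using cY0 subz by simp
    next
      case 3
      then obtain a b where ab: "N x = {a, b}" "a \<noteq> b" by (meson card_2_iff)
      have "opp a x b" using pair ab by auto
      then have "x \<in> V2pi \<epsilon> V E" using V2pi_iff[OF x ab] by simp
      moreover have "x \<notin> Vdeg V E 1" using 3 unfolding Vdeg_def by auto
      ultimately have "x \<in> A1" "x \<notin> A2" using z unfolding A1_def A2_def by blast+
      then show ?thesis using cY0 subz by simp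
    qed
  qed
qed

lemma sum_ind: "A \<subseteq> V \<Longrightarrow> (\<Sum>x\<in>V. if x \<in> A then 1 else 0::nat) = card A"
  using finV by (simp add: sum.If_cases Int_absorb1 inf.absorb2)

lemma A_sub: "A1 \<subseteq> V" "A2 \<subseteq> V" unfolding A1_def A2_def Vdeg_def V2pi_def by auto

lemma sub_sum: "(\<Sum>x\<in>V. card (sub x)) = card ISG + card A1 + card A2"
proof -
  have "(\<Sum>x\<in>V. card (sub x)) = (\<Sum>x\<in>V. card {y \<in> N x. IEnd x y}) + (\<Sum>x\<in>V. if x \<in> A1 then 1 else 0)
     + (\<Sum>x\<in>V. if x \<in> A2 then 1 else 0)"
    using per_vertex by (simp add: sum.distrib)
  then show ?thesis using card_ISG sum_ind A_sub by simp
qed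

lemma finite_A: "finite A1" "finite A2" using A_sub finV finite_subset by auto
lemma finite_ISG: "finite ISG" unfolding ISG_def using finite_SG by simp

lemma strata_int_unfold: "strata_int \<epsilon> r0 V E = mset_set ISG + image_mset (\<lambda>x. upath [x]) (mset_set A1)
     + image_mset (\<lambda>x. upath [x]) (mset_set A2)"
  unfolding strata_int_def ISG_def A1_def A2_def ..

lemma size_int: "size (strata_int \<epsilon> r0 V E) = card ISG + card A1 + card A2"
  unfolding strata_int_unfold by simp

lemma int_sub: "strata_int \<epsilon> r0 V E \<subseteq># strata \<epsilon> V E"
proof -
  let ?u = "\<lambda>x. upath [x]"
  let ?V0 = "Vdeg V E 0" and ?V12 = "Vdeg V E 1 \<union> V2pi \<epsilon> V E"
  have f: "finite ?V0" "finite ?V12" using finite_Vdeg finite_V2pi by auto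
  have d1: "A1 \<inter> A2 = {}" unfolding A1_def A2_def V2pi_def Vdeg_def by auto
  have d2: "?V0 \<inter> ?V12 = {}" unfolding V2pi_def Vdeg_def by auto
  have s1: "mset_set ISG \<subseteq># mset_set (S_Gamma \<epsilon> V E)" using finite_ISG finite_SG unfolding ISG_def by simp
  have "A1 \<union> A2 \<subseteq> ?V0 \<union> ?V12" unfolding A1_def A2_def by auto
  then have "mset_set (A1 \<union> A2) \<subseteq># mset_set (?V0 \<union> ?V12)" using finite_A f by simp
  then have "mset_set A1 + mset_set A2 \<subseteq># mset_set ?V0 + mset_set ?V12"
    using mset_set_Union[OF finite_A d1] mset_set_Union[OF f d2] by simp
  then have "image_mset ?u (mset_set A1 + mset_set A2) \<subseteq># image_mset ?u (mset_set ?V0 + mset_set ?V12)"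
    by (rule image_mset_subseteq_mono)
  then have s2: "image_mset ?u (mset_set A1) + image_mset ?u (mset_set A2) \<subseteq>#
      image_mset ?u (mset_set ?V0) + image_mset ?u (mset_set ?V12)" by simp
  have s3: "image_mset ?u (mset_set ?V0) + image_mset ?u (mset_set ?V12) \<subseteq>#
      image_mset ?u (mset_set ?V0) + image_mset ?u (mset_set ?V0) + image_mset ?u (mset_set ?V12)"
    by (simp add: subset_mset.add_increasing)
  have "mset_set ISG + (image_mset ?u (mset_set A1) + image_mset ?u (mset_set A2)) \<subseteq>#
      mset_set (S_Gamma \<epsilon> V E) + (image_mset ?u (mset_set ?V0) + image_mset ?u (mset_set ?V0) + image_mset ?u (mset_set ?V12))"
    using subset_mset.add_mono[OF s1 subset_mset.order_trans[OF s2 s3]] .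
  then show ?thesis unfolding strata_int_unfold strata_unfold by (simp add: add.assoc)
qed

lemma size_strata: "size (strata \<epsilon> V E) = card (S_Gamma \<epsilon> V E) + 2 * card (Vdeg V E 0) + card (Vdeg V E 1 \<union> V2pi \<epsilon> V E)"
  unfolding strata_unfold by simp

lemma slen_strata: "(\<Sum>s \<in># strata \<epsilon> V E. slen s) = (\<Sum>s\<in>S_Gamma \<epsilon> V E. slen s) + 2 * card (Vdeg V E 0) + card (Vdeg V E 1 \<union> V2pi \<epsilon> V E)"
proof -
  have a: "(\<Sum>s \<in># image_mset (\<lambda>x. upath [x]) (mset_set A). slen s) = card A" for A
    by (induction A rule: infinite_finite_induct) (simp_all add: slen_single)
  show ?thesis unfolding strata_unfold by (simp add: a sum_unfold_sum_mset)
qed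

lemma SG_slen: "s \<in> S_Gamma \<epsilon> V E \<Longrightarrow> slen s \<ge> 2"
  unfolding SG_iff using slen_upath sp_len mx_sp by auto

lemma part2: "F_bond \<beta> r0 V E = 2 * (1 - \<beta>) * real (size (strata_int \<epsilon> r0 V E))
                            + 2 * real (size (strata_no \<epsilon> r0 V E))"
proof -
  let ?SG = "S_Gamma \<epsilon> V E"
  let ?c0 = "card (Vdeg V E 0)" and ?c12 = "card (Vdeg V E 1 \<union> V2pi \<epsilon> V E)"
  have p1: "(\<Sum>s\<in>?SG. slen s) + 2 * ?c0 + ?c12 = 2 * card V" using part1 slen_strata by simp
  have "(\<Sum>x\<in>V. card (N x)) = (\<Sum>s\<in>?SG. 2 * (slen s - 1))" by (rule deg_sum)
  moreover have "real (\<Sum>s\<in>?SG. 2 * (slen s - 1)) = (\<Sum>s\<in>?SG. 2 * (real (slen s) - 1))"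
  proof -
    have "real (2 * (slen s - 1)) = 2 * (real (slen s) - 1)" if "s \<in> ?SG" for s
    proof -
      have "1 \<le> slen s" using SG_slen[OF that] by simp
      then show ?thesis by (simp add: of_nat_diff)
    qed
    then show ?thesis unfolding of_nat_sum by (rule sum.cong[OF refl])
  qed
  ultimately have "real (\<Sum>x\<in>V. card (N x)) = (\<Sum>s\<in>?SG. 2 * (real (slen s) - 1))" by simp
  have dg0: "(\<Sum>s\<in>?SG. 2 * (real (slen s) - 1)) = (\<Sum>s\<in>?SG. 2 * real (slen s)) - (\<Sum>s\<in>?SG. 2)"
    by (simp add: sum_subtractf right_diff_distrib)
  also have "\<dots> = 2 * (\<Sum>s\<in>?SG. real (slen s)) - 2 * real (card ?SG)"
    by (simp add: sum_distrib_left)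
  finally have dg: "(\<Sum>x\<in>V. real (card (N x))) = 2 * real (\<Sum>s\<in>?SG. slen s) - 2 * real (card ?SG)"
    using \<open>real (\<Sum>x\<in>V. card (N x)) = (\<Sum>s\<in>?SG. 2 * (real (slen s) - 1))\<close> by (simp add: of_nat_sum)
  have sb: "(\<Sum>x\<in>V. real (card (sub x))) = real (size (strata_int \<epsilon> r0 V E))"
  proof -
    have "(\<Sum>x\<in>V. real (card (sub x))) = real (\<Sum>x\<in>V. card (sub x))" by (simp only: of_nat_sum)
    also have "\<dots> = real (size (strata_int \<epsilon> r0 V E))" by (simp only: sub_sum size_int)
    finally show ?thesis .
  qed
  have sn: "real (size (strata_no \<epsilon> r0 V E)) = real (size (strata \<epsilon> V E)) - real (size (strata_int \<epsilon> r0 V E))"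
    unfolding strata_no_def using size_Diff_submset[OF int_sub] size_mset_mono[OF int_sub] by (simp add: of_nat_diff)
  have "F_bond \<beta> r0 V E = 4 * real (card V) - (\<Sum>x\<in>V. real (card (N x))) - 2 * \<beta> * (\<Sum>x\<in>V. real (card (sub x)))"
    unfolding F_bond_def by (simp only: sum_subtractf sum_distrib_left[symmetric] sum_constant)
  also have "\<dots> = 2 * real (size (strata \<epsilon> V E)) - 2 * \<beta> * real (size (strata_int \<epsilon> r0 V E))"
  proof -
    have "real ((\<Sum>s\<in>?SG. slen s) + 2 * ?c0 + ?c12) = real (2 * card V)" using p1 by (simp only:)
    then have e: "real (\<Sum>s\<in>?SG. slen s) + 2 * real ?c0 + real ?c12 = 2 * real (card V)"
      by (simp only: of_nat_add of_nat_mult of_nat_numeral)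
    have e2: "real (size (strata \<epsilon> V E)) = real (card ?SG) + 2 * real ?c0 + real ?c12"
      unfolding size_strata by (simp only: of_nat_add of_nat_mult of_nat_numeral)
    show ?thesis unfolding dg sb e2 using e by (simp add: algebra_simps)
  qed
  also have "\<dots> = 2 * (1 - \<beta>) * real (size (strata_int \<epsilon> r0 V E)) + 2 * real (size (strata_no \<epsilon> r0 V E))"
    unfolding sn by (simp add: algebra_simps)
  finally show ?thesis .
qed

end


theorem lemma3p7:
  fixes \<epsilon> \<beta> r0 :: real and V :: "complex set" and E :: "complex set set"
  assumes beta: "\<beta> > 0"
    and r0: "1 < r0" "r0 < sqrt 2"
    and eps: "0 < \<epsilon>" "\<epsilon> \<le> pi / 39"
    and finV: "finite V"
    and upper: "\<forall>x \<in> V. Im x > 0"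
    and graph: "E \<subseteq> {{x, y} | x y. x \<in> V \<and> y \<in> V \<and> x \<noteq> y}"
    and reg: "regular \<epsilon> r0 V E"
    and excess: "\<forall>\<gamma> \<in> Gamma \<epsilon> V E. angle_excess \<gamma> < pi / 10 - 7 / 5 * \<epsilon>"
  shows "((\<Sum>s \<in># strata \<epsilon> V E. slen s) = 2 * card V) \<and>
         F_bond \<beta> r0 V E = 2 * (1 - \<beta>) * real (size (strata_int \<epsilon> r0 V E))
                            + 2 * real (size (strata_no \<epsilon> r0 V E)) \<and>
         (\<forall>x \<in> V. \<exists>s s'. filter_mset (\<lambda>t. x \<in> spts t) (strata \<epsilon> V E) = {#s, s'#}
                        \<and> s' \<in># strata_perp \<epsilon> V E s)"
proof -
  interpret setting \<epsilon> r0 V E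
    using eps finV upper graph reg excess by unfold_locales
  show ?thesis using part1 part2 part3 by blast
qed

end
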